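(* Let $\theta_1,\theta_2,\dots\ge0$ with $\theta_n\to\theta>0$. Then, as $n\to\infty$, \[ h_n=\frac{n^{\theta-1}}{\Gamma(\theta)}\,\Lambda(n)\,(1+o(1)), \] where $\Lambda$ is defined on $[1,\infty)$ by $\Lambda\bigl(\frac1{1-s}\bigr)=\exp\sum_{j\ge1}\frac{\theta_j-\theta}{j}s^j$ for $0\le s<1$.
   Context: For $\sigma\in\mathcal{S}_n$, $R_j(\sigma)$ is the number of cycles of length $j$; $h_0=1$ and $h_n=\frac1{n!}\sum_{\sigma\in\mathcal{S}_n}\prod_{j\ge1}\theta_j^{R_j(\sigma)}$. *)

theory Defs
  imports "HOL-Analysis.Analysis" "HOL-Combinatorics.Permutations" "HOL-Combinatorics.Orbits"
    "HOL-Library.Landau_Symbols"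
begin

definition perm_cycles :: "nat \<Rightarrow> (nat \<Rightarrow> nat) \<Rightarrow> nat set set" where
  "perm_cycles n \<sigma> = (\<lambda>x. orbit \<sigma> x) ` {1..n}"

definition cycle_count :: "nat \<Rightarrow> (nat \<Rightarrow> nat) \<Rightarrow> nat \<Rightarrow> nat" where
  "cycle_count n \<sigma> j = card {C \<in> perm_cycles n \<sigma>. card C = j}"

text \<open>h_n = (1/n!) \<Sum>_{\<sigma> \<in> S_n} \<Prod>_{j\<ge>1} \<theta>_j^{R_j(\<sigma>)}; only j \<le> n contribute
  (R_j = 0 for j > n), so the product is over {1..n}. For n = 0 this gives h_0 = 1.\<close>
definition hseq :: "(nat \<Rightarrow> real) \<Rightarrow> nat \<Rightarrow> real" where
  "hseq \<theta> n = (1 / fact n) *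
     (\<Sum>\<sigma> \<in> {\<sigma>. \<sigma> permutes {1..n}}. \<Prod>j\<in>{1..n}. \<theta> j ^ cycle_count n \<sigma> j)"

text \<open>\<Lambda>(x) for x \<ge> 1, via \<Lambda>(1/(1-s)) = exp (\<Sum>_{j\<ge>1} (\<theta>_j-\<theta>)/j s^j), i.e. s = 1 - 1/x.\<close>
definition Lambda :: "(nat \<Rightarrow> real) \<Rightarrow> real \<Rightarrow> real \<Rightarrow> real" where
  "Lambda \<theta> th x = exp (\<Sum>j. (\<theta> (Suc j) - th) / real (Suc j) * (1 - 1 / x) ^ (Suc j))"

end

theory Submission
  imports Defs "HOL-Combinatorics.Cycles" "HOL-Real_Asymp.Real_Asymp"
begin


fun rr :: "(nat \<Rightarrow> real) \<Rightarrow> nat \<Rightarrow> real" where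
  "rr w 0 = 1"
| "rr w (Suc n) = (\<Sum>k\<le>n. w (Suc k) * rr w (n - k)) / real (Suc n)"

definition wt :: "(nat \<Rightarrow> real) \<Rightarrow> ('a \<Rightarrow> 'a) \<Rightarrow> 'a set \<Rightarrow> real" where
  "wt w \<sigma> A = (\<Prod>C\<in>(\<lambda>x. orbit \<sigma> x) ` A. w (card C))"

definition WW :: "(nat \<Rightarrow> real) \<Rightarrow> 'a set \<Rightarrow> real" where
  "WW w A = (\<Sum>\<sigma>\<in>{\<sigma>. \<sigma> permutes A}. wt w \<sigma> A)"

lemma orbit_decomp:
  assumes "\<sigma> permutes A" "finite A" "a \<in> A"
  defines "Ob \<equiv> orbit \<sigma> a"
  defines "\<tau> \<equiv> perm_restrict \<sigma> (A - Ob)"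
  shows "(\<lambda>x. orbit \<sigma> x) ` A = insert Ob ((\<lambda>x. orbit \<tau> x) ` (A - Ob))"
    and "Ob \<notin> (\<lambda>x. orbit \<tau> x) ` (A - Ob)"
    and "\<tau> permutes (A - Ob)" and "Ob \<subseteq> A" and "a \<in> Ob"
proof -
  have perm: "permutation \<sigma>" using assms(1,2) permutation_permutes by blast
  have cyc: "cyclic_on \<sigma> Ob" unfolding Ob_def using assms(1,2) by (rule cyclic_on_orbit)
  show tp: "\<tau> permutes (A - Ob)" unfolding \<tau>_def by (rule perm_restrict_diff_cyclic[OF assms(1) cyc])
  show OA: "Ob \<subseteq> A" unfolding Ob_def by (rule permutes_orbit_subset[OF assms(1,3)])
  show aO: "a \<in> Ob" unfolding Ob_def by (rule permutation_self_in_orbit[OF perm])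
  have eqo: "orbit \<tau> x = orbit \<sigma> x" if "x \<in> A - Ob" for x
  proof (rule orbit_cong0[OF that])
    show "\<tau> \<in> A - Ob \<rightarrow> A - Ob" using tp permutes_in_image by fastforce
    show "\<And>y. y \<in> A - Ob \<Longrightarrow> \<tau> y = \<sigma> y" unfolding \<tau>_def by (simp add: perm_restrict_simps)
  qed
  have eqOb: "orbit \<sigma> x = Ob" if "x \<in> Ob" for x using orbit_cyclic_eq3[OF cyc that] .
  show "(\<lambda>x. orbit \<sigma> x) ` A = insert Ob ((\<lambda>x. orbit \<tau> x) ` (A - Ob))"
  proof
    show "(\<lambda>x. orbit \<sigma> x) ` A \<subseteq> insert Ob ((\<lambda>x. orbit \<tau> x) ` (A - Ob))"
      using eqo eqOb by (auto simp del: Diff_iff)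
    show "insert Ob ((\<lambda>x. orbit \<tau> x) ` (A - Ob)) \<subseteq> (\<lambda>x. orbit \<sigma> x) ` A"
    proof
      fix C assume "C \<in> insert Ob ((\<lambda>x. orbit \<tau> x) ` (A - Ob))"
      then consider "C = Ob" | x where "x \<in> A - Ob" "C = orbit \<tau> x" by blast
      then show "C \<in> (\<lambda>x. orbit \<sigma> x) ` A"
      proof cases
        case 1 then show ?thesis using eqOb[OF aO] aO OA by (metis image_eqI subsetD)
      next
        case 2 then show ?thesis using eqo[OF 2(1)] by blast
      qed
    qed
  qed
  show "Ob \<notin> (\<lambda>x. orbit \<tau> x) ` (A - Ob)"
  proof
    assume "Ob \<in> (\<lambda>x. orbit \<tau> x) ` (A - Ob)"
    then obtain x where x: "x \<in> A - Ob" "Ob = orbit \<tau> x" by auto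
    have "orbit \<tau> x \<subseteq> A - Ob" using permutes_orbit_subset[OF tp x(1)] .
    with x aO show False by auto
  qed
qed

lemma supp_facts:
  assumes "\<sigma> permutes A" "finite A"
  shows "support \<sigma> a = a # tl (support \<sigma> a)" "distinct (support \<sigma> a)"
    "set (support \<sigma> a) = orbit \<sigma> a"
proof -
  have perm: "permutation \<sigma>" using assms permutation_permutes by blast
  have lp: "least_power \<sigma> a > 0" using least_power_of_permutation(2)[OF perm] .
  then have "[0..<least_power \<sigma> a] = 0 # [1..<least_power \<sigma> a]" by (simp add: upt_rec)
  then show "support \<sigma> a = a # tl (support \<sigma> a)" by simp
  show "distinct (support \<sigma> a)" by (rule cycle_of_permutation[OF perm])
  show "set (support \<sigma> a) = orbit \<sigma> a"
    unfolding support_set[OF perm] orbit_altdef_permutation[OF perm] by auto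
qed

lemma decomp_eq:
  assumes "\<sigma> permutes A" "finite A"
  shows "\<sigma> = cycle_of_list (support \<sigma> a) \<circ> perm_restrict \<sigma> (A - orbit \<sigma> a)"
proof
  fix x
  have perm: "permutation \<sigma>" using assms permutation_permutes by blast
  have cyc: "cyclic_on \<sigma> (orbit \<sigma> a)" using assms by (rule cyclic_on_orbit)
  note S = supp_facts[OF assms, of a]
  show "\<sigma> x = (cycle_of_list (support \<sigma> a) \<circ> perm_restrict \<sigma> (A - orbit \<sigma> a)) x"
  proof (cases "x \<in> orbit \<sigma> a")
    case True
    then have "perm_restrict \<sigma> (A - orbit \<sigma> a) x = x" by (simp add: perm_restrict_simps)
    then show ?thesis using cycle_restrict[OF perm, of x a] True S(3) by simp
  next
    case False
    have "\<sigma> x \<notin> orbit \<sigma> a"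
    proof
      assume "\<sigma> x \<in> orbit \<sigma> a"
      then have "orbit \<sigma> (\<sigma> x) = orbit \<sigma> a" by (rule orbit_cyclic_eq3[OF cyc])
      then have "orbit \<sigma> x = orbit \<sigma> a" using permutation_orbit_step[OF perm] by simp
      then show False using False permutation_self_in_orbit[OF perm, of x] by simp
    qed
    moreover have "perm_restrict \<sigma> (A - orbit \<sigma> a) x = \<sigma> x"
      using False assms(1) by (cases "x \<in> A") (auto simp: perm_restrict_simps permutes_not_in)
    ultimately show ?thesis using id_outside_supp[of "\<sigma> x" "support \<sigma> a"] S(3) by simp
  qed
qed

lemma cycle_support:
  assumes "distinct cs" "cs \<noteq> []" "\<tau> permutes B" "B \<inter> set cs = {}"
  shows "support (cycle_of_list cs \<circ> \<tau>) (hd cs) = cs"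
proof -
  let ?c = "cycle_of_list cs" let ?s = "?c \<circ> \<tau>"
  have fix\<tau>: "\<tau> y = y" if "y \<in> set cs" for y using assms(3,4) that by (meson disjoint_iff permutes_not_in)
  have cin: "?c y \<in> set cs" if "y \<in> set cs" for y
    using that by (simp add: permutes_in_image[OF cycle_permutes])
  have pw: "(?s ^^ n) (hd cs) = (?c ^^ n) (hd cs) \<and> (?c ^^ n) (hd cs) \<in> set cs" for n
  proof (induction n)
    case 0 then show ?case using assms(2) by simp
  next
    case (Suc n) then show ?case using fix\<tau> cin by simp
  qed
  have cn: "(?c ^^ n) (hd cs) = cs ! (n mod length cs)" for n
  proof -
    have "map (?c ^^ n) cs = rotate n cs" by (rule cyclic_rotation[OF assms(1)])
    then have "(?c ^^ n) (cs ! 0) = rotate n cs ! 0" using assms(2)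
      by (metis length_greater_0_conv nth_map)
    then show ?thesis using assms(2) by (simp add: nth_rotate hd_conv_nth)
  qed
  have sn: "(?s ^^ n) (hd cs) = cs ! (n mod length cs)" for n using pw cn by simp
  have lp: "least_power ?s (hd cs) = length cs"
    unfolding least_power_def
  proof (rule Least_equality)
    show "(?s ^^ length cs) (hd cs) = hd cs \<and> 0 < length cs" using sn assms(2) by (simp add: hd_conv_nth)
  next
    fix m assume m: "(?s ^^ m) (hd cs) = hd cs \<and> 0 < m"
    show "length cs \<le> m"
    proof (rule ccontr)
      assume "\<not> length cs \<le> m"
      then have "cs ! m = cs ! 0" using m sn[of m] assms(2) by (simp add: hd_conv_nth)
      then have "m = 0" using nth_eq_iff_index_eq[OF assms(1)] \<open>\<not> length cs \<le> m\<close> assms(2) by auto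
      then show False using m by simp
    qed
  qed
  show ?thesis unfolding lp sn
    by (rule nth_equalityI) auto
qed

lemma G_permutes:
  assumes "distinct (a # xs)" "set (a # xs) \<subseteq> A" "\<tau> permutes (A - insert a (set xs))"
  shows "(cycle_of_list (a # xs) \<circ> \<tau>) permutes A"
proof (rule permutes_compose)
  show "\<tau> permutes A" using assms(3) by (rule permutes_subset) auto
  show "cycle_of_list (a # xs) permutes A" using cycle_permutes[of "a # xs"] assms(2)
    by (rule permutes_subset)
qed

lemma wt_decomp:
  assumes "\<sigma> permutes A" "finite A" "a \<in> A"
  shows "wt w \<sigma> A = w (card (orbit \<sigma> a)) * wt w (perm_restrict \<sigma> (A - orbit \<sigma> a)) (A - orbit \<sigma> a)"
  unfolding wt_def orbit_decomp(1)[OF assms]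
  by (rule prod.insert) (use orbit_decomp(2)[OF assms] assms(2) in auto)

lemma WW_rec:
  assumes "finite A" "a \<in> A"
  shows "WW w A = (\<Sum>xs\<in>{xs. distinct xs \<and> set xs \<subseteq> A - {a}}.
                      w (Suc (length xs)) * WW w (A - insert a (set xs)))"
proof -
  define L where "L = {xs. distinct xs \<and> set xs \<subseteq> A - {a}}"
  define T where "T = (SIGMA xs:L. {\<tau>. \<tau> permutes (A - insert a (set xs))})"
  define F where "F = (\<lambda>\<sigma>. (tl (support \<sigma> a), perm_restrict \<sigma> (A - orbit \<sigma> a)))"
  define G where "G = (\<lambda>(xs, \<tau>::'a\<Rightarrow>'a). cycle_of_list (a # xs) \<circ> \<tau>)"
  define h where "h = (\<lambda>(xs, \<tau>). w (Suc (length xs)) * wt w \<tau> (A - insert a (set xs)))"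
  have finL: "finite L" unfolding L_def
    using finite_subset_distinct[of "A - {a}"] assms(1) by (simp add: conj_commute)
  have "WW w A = sum h T"
    unfolding WW_def
  proof (rule sum.reindex_bij_witness[of _ G F])
    fix \<sigma> assume "\<sigma> \<in> {\<sigma>. \<sigma> permutes A}"
    then have sp: "\<sigma> permutes A" by simp
    note S = supp_facts[OF sp assms(1), of a]
    note D = orbit_decomp[OF sp assms(1,2)]
    have setO: "insert a (set (tl (support \<sigma> a))) = orbit \<sigma> a"
      using S(1,3) by (metis list.simps(15))
    show "G (F \<sigma>) = \<sigma>" unfolding G_def F_def using decomp_eq[OF sp assms(1), of a] S(1) by simp
    show "F \<sigma> \<in> T"
    proof -
      have "distinct (tl (support \<sigma> a))" using S(2) by (simp add: distinct_tl)
      moreover have "set (tl (support \<sigma> a)) \<subseteq> A - {a}"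
      proof -
        have "a \<notin> set (tl (support \<sigma> a))" using S(2) by (subst (asm) S(1)) simp
        moreover have "set (tl (support \<sigma> a)) \<subseteq> orbit \<sigma> a"
          using setO by blast
        ultimately show ?thesis using D(4) by blast
      qed
      moreover have "perm_restrict \<sigma> (A - orbit \<sigma> a) permutes (A - insert a (set (tl (support \<sigma> a))))"
        using D(3) setO by simp
      ultimately show ?thesis unfolding F_def T_def L_def by simp
    qed
    show "h (F \<sigma>) = wt w \<sigma> A"
    proof -
      have "card (orbit \<sigma> a) = Suc (length (tl (support \<sigma> a)))"
        using S by (metis distinct_card length_Cons)
      then show ?thesis unfolding h_def F_def using wt_decomp[OF sp assms(1,2), of w] setO by simp
    qed
  next
    fix p assume "p \<in> T"
    then obtain xs \<tau> where p: "p = (xs, \<tau>)" "distinct xs" "set xs \<subseteq> A - {a}"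
      "\<tau> permutes (A - insert a (set xs))" unfolding T_def L_def by auto
    have dist: "distinct (a # xs)" using p by auto
    have sub: "set (a # xs) \<subseteq> A" using p assms(2) by auto
    have sp: "(cycle_of_list (a # xs) \<circ> \<tau>) permutes A" by (rule G_permutes[OF dist sub p(4)])
    then show "G p \<in> {\<sigma>. \<sigma> permutes A}" unfolding G_def p by simp
    let ?s = "cycle_of_list (a # xs) \<circ> \<tau>"
    have "support ?s (hd (a # xs)) = a # xs"
      by (rule cycle_support[OF dist _ p(4)]) auto
    then have supp: "support ?s a = a # xs" by simp
    have orb: "orbit ?s a = insert a (set xs)"
      using supp_facts(3)[OF sp assms(1), of a] supp by simp
    have pr: "perm_restrict ?s (A - insert a (set xs)) = \<tau>"
    proof
      fix x show "perm_restrict ?s (A - insert a (set xs)) x = \<tau> x"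
      proof (cases "x \<in> A - insert a (set xs)")
        case True
        then have "\<tau> x \<in> A - insert a (set xs)" using p(4) by (simp only: permutes_in_image)
        then have "cycle_of_list (a # xs) (\<tau> x) = \<tau> x" by (intro id_outside_supp) auto
        then show ?thesis using True by (simp add: perm_restrict_simps)
      next
        case False then show ?thesis using p(4) by (simp add: perm_restrict_simps permutes_not_in)
      qed
    qed
    show "F (G p) = p" unfolding F_def G_def p using supp orb pr by simp
  qed
  also have "\<dots> = (\<Sum>xs\<in>L. \<Sum>\<tau>\<in>{\<tau>. \<tau> permutes (A - insert a (set xs))}.
                    w (Suc (length xs)) * wt w \<tau> (A - insert a (set xs)))"
    unfolding T_def h_def
    by (rule sum.Sigma[symmetric]) (use finL assms(1) finite_permutations in auto)
  also have "\<dots> = (\<Sum>xs\<in>L. w (Suc (length xs)) * WW w (A - insert a (set xs)))"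
    unfolding WW_def by (simp add: sum_distrib_left)
  finally show ?thesis unfolding L_def .
qed

lemma prod_fact_aux:
  assumes "k \<le> m"
  shows "real (\<Prod>{m - k + 1..m}) * fact (m - k) = fact m"
  using assms
proof (induction k)
  case 0 then show ?case by simp
next
  case (Suc k)
  have e: "{m - Suc k + 1..m} = insert (m - k) {m - k + 1..m}" using Suc.prems by auto
  have A: "real (\<Prod>{m - Suc k + 1..m}) = real (m - k) * real (\<Prod>{m - k + 1..m})"
    unfolding e by (subst prod.insert) auto
  have B: "fact (m - k) = real (m - k) * (fact (m - Suc k) :: real)"
    using Suc.prems by (metis Suc_diff_Suc fact_Suc le_imp_less_Suc less_eq_Suc_le of_nat_Suc Suc_diff_le diff_Suc_Suc)
  have "real (\<Prod>{m - Suc k + 1..m}) * fact (m - Suc k) = real (\<Prod>{m - k + 1..m}) * fact (m - k)"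
    unfolding A B by (simp only: mult_ac)
  also have "\<dots> = fact m" using Suc by simp
  finally show ?case .
qed

lemma WW_empty: "WW w {} = 1"
  unfolding WW_def wt_def by (simp add: permutes_empty)

lemma WW_closed:
  assumes "finite A"
  shows "WW w A = fact (card A) * rr w (card A)"
  using assms
proof (induction "card A" arbitrary: A rule: less_induct)
  case less
  show ?case
  proof (cases "A = {}")
    case True then show ?thesis by (simp add: WW_empty)
  next
    case False
    then obtain a where a: "a \<in> A" by auto
    define m where "m = card A - 1"
    have cA: "card A = Suc m" using False less.prems a m_def by (simp add: card_gt_0_iff)
    define L where "L = {xs. distinct xs \<and> set xs \<subseteq> A - {a}}"
    have cAa: "card (A - {a}) = m" using cA a less.prems by simp
    have finL: "finite L" unfolding L_def
      using finite_subset_distinct[of "A - {a}"] less.prems by (simp add: conj_commute)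
    have lenL: "length xs \<le> m" if "xs \<in> L" for xs
    proof -
      have "length xs = card (set xs)" using that unfolding L_def by (simp add: distinct_card)
      also have "\<dots> \<le> card (A - {a})" using that less.prems unfolding L_def by (intro card_mono) auto
      finally show ?thesis using cAa by simp
    qed
    have IH: "WW w (A - insert a (set xs)) = fact (m - length xs) * rr w (m - length xs)"
      if "xs \<in> L" for xs
    proof -
      have c: "card (A - insert a (set xs)) = m - length xs"
      proof -
        have "card (A - insert a (set xs)) = card A - card (insert a (set xs))"
          using that a less.prems unfolding L_def by (intro card_Diff_subset) auto
        also have "card (insert a (set xs)) = Suc (length xs)"
          using that unfolding L_def by (subst card_insert_disjoint) (auto simp: distinct_card)
        finally show ?thesis using cA by simp
      qed
      show ?thesis
        using less.hyps[of "A - insert a (set xs)"] c cA less.prems by simp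
    qed
    have "WW w A = (\<Sum>xs\<in>L. w (Suc (length xs)) * WW w (A - insert a (set xs)))"
      unfolding L_def by (rule WW_rec[OF less.prems a])
    also have "\<dots> = (\<Sum>xs\<in>L. w (Suc (length xs)) * (fact (m - length xs) * rr w (m - length xs)))"
      by (rule sum.cong) (simp_all add: IH)
    also have "\<dots> = (\<Sum>k\<le>m. \<Sum>xs\<in>{xs\<in>L. length xs = k}. w (Suc (length xs)) * (fact (m - length xs) * rr w (m - length xs)))"
      by (rule sum.group[symmetric]) (use finL lenL in auto)
    also have "\<dots> = (\<Sum>k\<le>m. real (card {xs\<in>L. length xs = k}) * (w (Suc k) * (fact (m - k) * rr w (m - k))))"
      by (rule sum.cong) simp_all
    also have "\<dots> = (\<Sum>k\<le>m. fact m * (w (Suc k) * rr w (m - k)))"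
    proof (rule sum.cong)
      fix k assume k: "k \<in> {..m}"
      have "{xs\<in>L. length xs = k} = {xs. length xs = k \<and> distinct xs \<and> set xs \<subseteq> A - {a}}"
        unfolding L_def by auto
      then have "card {xs\<in>L. length xs = k} = \<Prod>{m - k + 1..m}"
        using card_lists_distinct_length_eq[of "A - {a}" k] less.prems k cAa by simp
      then show "real (card {xs\<in>L. length xs = k}) * (w (Suc k) * (fact (m - k) * rr w (m - k)))
          = fact m * (w (Suc k) * rr w (m - k))"
        using prod_fact_aux[of k m] k by (simp add: algebra_simps)
    qed simp
    also have "\<dots> = fact (Suc m) * rr w (Suc m)"
      by (simp add: sum_distrib_left[symmetric] field_simps)
    finally show ?thesis using cA by simp
  qed
qed

lemma prod_cycles:
  assumes "\<sigma> permutes {1..n}"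
  shows "(\<Prod>j\<in>{1..n}. \<theta> j ^ cycle_count n \<sigma> j) = wt \<theta> \<sigma> {1..n}"
proof -
  let ?S = "perm_cycles n \<sigma>"
  have finS: "finite ?S" unfolding perm_cycles_def by simp
  have cardS: "card C \<in> {1..n}" if CS: "C \<in> ?S" for C
  proof -
    obtain x where x: "x \<in> {1..n}" "C = orbit \<sigma> x" using CS unfolding perm_cycles_def image_iff by blast
    have sub: "C \<subseteq> {1..n}" using permutes_orbit_subset[OF assms x(1)] x(2) by simp
    have "C \<noteq> {}" using x(2) orbit_nonempty by simp
    then have "card C \<ge> 1" using sub finite_subset by (metis One_nat_def Suc_leI card_gt_0_iff finite_atLeastAtMost)
    moreover have "card C \<le> n" using card_mono[OF _ sub] by simp
    ultimately show ?thesis by simp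
  qed
  have "wt \<theta> \<sigma> {1..n} = (\<Prod>C\<in>?S. \<theta> (card C))" unfolding wt_def perm_cycles_def ..
  also have "\<dots> = (\<Prod>j\<in>{1..n}. \<Prod>C\<in>{C\<in>?S. card C = j}. \<theta> (card C))"
    by (rule prod.group[symmetric]) (use finS cardS in auto)
  also have "\<dots> = (\<Prod>j\<in>{1..n}. \<theta> j ^ cycle_count n \<sigma> j)"
  proof (rule prod.cong)
    fix j
    have "(\<Prod>C\<in>{C\<in>?S. card C = j}. \<theta> (card C)) = (\<Prod>C\<in>{C\<in>?S. card C = j}. \<theta> j)"
      by (rule prod.cong) auto
    then show "(\<Prod>C\<in>{C\<in>?S. card C = j}. \<theta> (card C)) = \<theta> j ^ cycle_count n \<sigma> j"
      unfolding cycle_count_def by simp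
  qed simp
  finally show ?thesis ..
qed

lemma hseq_rr: "hseq \<theta> n = rr \<theta> n"
proof -
  have "hseq \<theta> n = (1 / fact n) * WW \<theta> {1..n}"
    unfolding hseq_def WW_def by (intro arg_cong[where f="\<lambda>x. 1 / fact n * x"] sum.cong refl prod_cycles) simp
  also have "\<dots> = rr \<theta> n" using WW_closed[of "{1..n::nat}" \<theta>] by simp
  finally show ?thesis .
qed



lemma rr_nonneg:
  assumes "\<And>j. j \<ge> 1 \<Longrightarrow> w j \<ge> 0"
  shows "rr w n \<ge> 0"
proof (induction n rule: less_induct)
  case (less n)
  show ?case
  proof (cases n)
    case 0 then show ?thesis by simp
  next
    case (Suc m)
    have "(\<Sum>k\<le>m. w (Suc k) * rr w (m - k)) \<ge> 0"
      using assms less Suc by (intro sum_nonneg mult_nonneg_nonneg) auto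
    then show ?thesis using Suc by simp
  qed
qed

lemma rr_mono:
  assumes "\<And>j. j \<ge> 1 \<Longrightarrow> w j \<ge> 0" "\<And>j. j \<ge> 1 \<Longrightarrow> w j \<le> v j"
  shows "rr w n \<le> rr v n"
proof (induction n rule: less_induct)
  case (less n)
  show ?case
  proof (cases n)
    case 0 then show ?thesis by simp
  next
    case (Suc m)
    have "(\<Sum>k\<le>m. w (Suc k) * rr w (m - k)) \<le> (\<Sum>k\<le>m. v (Suc k) * rr v (m - k))"
    proof (rule sum_mono)
      fix k assume "k \<in> {..m}"
      have "rr w (m - k) \<le> rr v (m - k)" using less Suc by simp
      moreover have "0 \<le> rr w (m - k)" by (rule rr_nonneg[OF assms(1)])
      moreover have "0 \<le> w (Suc k)" "w (Suc k) \<le> v (Suc k)" using assms by auto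
      ultimately show "w (Suc k) * rr w (m - k) \<le> v (Suc k) * rr v (m - k)"
        by (meson mult_mono order_trans)
    qed
    then show ?thesis using Suc by (simp add: divide_right_mono)
  qed
qed

lemma poch_hockey:
  "(\<Sum>i\<le>n. pochhammer c i / fact i) = pochhammer (c + 1) n / (fact n :: real)"
proof (induction n)
  case 0 then show ?case by simp
next
  case (Suc n)
  have "(\<Sum>i\<le>Suc n. pochhammer c i / fact i) = pochhammer (c + 1) n / fact n + pochhammer c (Suc n) / fact (Suc n)"
    using Suc by simp
  also have "\<dots> = pochhammer (c + 1) (Suc n) / (fact (Suc n) :: real)"
  proof -
    have key: "P / F + c * P / (F * (m + 1)) = P * (c + 1 + m) / (F * (m + 1))"
      if "F > 0" "m + 1 > 0" for P F m :: real
    proof -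
      have "P * (c + 1 + m) = P * (m + 1) + c * P" by (simp add: algebra_simps)
      then have "P * (c + 1 + m) / (F * (m + 1)) = P * (m + 1) / (F * (m + 1)) + c * P / (F * (m + 1))"
        by (simp add: add_divide_distrib)
      moreover have "P * (m + 1) / (F * (m + 1)) = P / F" using that by simp
      ultimately show ?thesis by simp
    qed
    show ?thesis
      unfolding pochhammer_rec[of c n] pochhammer_Suc[of "c + 1" n] fact_Suc
      using key[of "fact n" "real n" "pochhammer (c + 1) n"] by (simp add: ac_simps)
  qed
  finally show ?case .
qed

lemma rr_const: "rr (\<lambda>_. c) n = pochhammer c n / fact n"
proof (induction n rule: less_induct)
  case (less n)
  show ?case
  proof (cases n)
    case 0 then show ?thesis by simp
  next
    case (Suc m)
    have "(\<Sum>k\<le>m. c * rr (\<lambda>_. c) (m - k)) = c * (\<Sum>k\<le>m. pochhammer c (m - k) / fact (m - k))"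
      using less Suc by (simp add: sum_distrib_left)
    also have "(\<Sum>k\<le>m. pochhammer c (m - k) / fact (m - k)) = (\<Sum>k\<le>m. pochhammer c k / (fact k :: real))"
      by (rule sum.reindex_bij_witness[of _ "\<lambda>k. m - k" "\<lambda>k. m - k"]) auto
    also have "\<dots> = pochhammer (c + 1) m / fact m" by (rule poch_hockey)
    finally have "rr (\<lambda>_. c) (Suc m) = c * (pochhammer (c + 1) m / fact m) / real (Suc m)" by simp
    also have "\<dots> = pochhammer c (Suc m) / fact (Suc m)"
      by (simp add: pochhammer_rec field_simps)
    finally show ?thesis using Suc by simp
  qed
qed

lemma rr_const_sums:
  assumes "\<bar>y\<bar> < 1"
  shows "(\<lambda>n. rr (\<lambda>_. c) n * y ^ n) sums (1 - y) powr (- c)"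
proof -
  have "(\<lambda>n. ((- c) gchoose n) * (- y) ^ n) sums (1 + - y) powr (- c)"
    using assms by (intro gen_binomial_real) simp
  moreover have "((- c) gchoose n) * (- y) ^ n = rr (\<lambda>_. c) n * y ^ n" for n
    unfolding rr_const gbinomial_pochhammer
    by (simp add: power_mult_distrib[symmetric] field_simps)
  ultimately show ?thesis by simp
qed

lemma rr_summable:
  assumes "\<And>j. j \<ge> 1 \<Longrightarrow> w j \<ge> 0" "\<And>j. j \<ge> 1 \<Longrightarrow> w j \<le> M" "\<bar>x\<bar> < 1"
  shows "summable (\<lambda>n. rr w n * x ^ n)" "summable (\<lambda>n. norm (rr w n * x ^ n))"
proof -
  have sM: "summable (\<lambda>n. rr (\<lambda>_. M) n * \<bar>x\<bar> ^ n)"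
    using rr_const_sums[of "\<bar>x\<bar>" M] assms(3) by (simp add: sums_summable)
  have le: "norm (rr w n * x ^ n) \<le> rr (\<lambda>_. M) n * \<bar>x\<bar> ^ n" for n
  proof -
    have "norm (rr w n * x ^ n) = rr w n * \<bar>x\<bar> ^ n"
      using rr_nonneg[OF assms(1)] by (simp add: abs_mult power_abs)
    also have "\<dots> \<le> rr (\<lambda>_. M) n * \<bar>x\<bar> ^ n"
      by (intro mult_right_mono rr_mono) (use assms in auto)
    finally show ?thesis .
  qed
  show "summable (\<lambda>n. norm (rr w n * x ^ n))"
    by (rule summable_comparison_test[OF _ sM]) (use le in auto)
  then show "summable (\<lambda>n. rr w n * x ^ n)" by (rule summable_norm_cancel)
qed



lemma rr_gf:
  assumes w0: "\<And>j. j \<ge> 1 \<Longrightarrow> w j \<ge> 0" and wM: "\<And>j. j \<ge> 1 \<Longrightarrow> w j \<le> M"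
    and x: "\<bar>x\<bar> < 1"
  shows "(\<Sum>n. rr w n * x ^ n) = exp (\<Sum>j. w (Suc j) / real (Suc j) * x ^ Suc j)"
proof -
  define c where "c j = (if j = 0 then 0 else w j / real j)" for j
  define F where "F y = (\<Sum>n. rr w n * y ^ n)" for y :: real
  define S where "S y = (\<Sum>j. c j * y ^ j)" for y :: real
  define D where "D y = (\<Sum>n. w (Suc n) * y ^ n)" for y :: real
  have M0: "M \<ge> 0" using w0[of 1] wM[of 1] by simp
  have cb: "\<bar>c j\<bar> \<le> M" for j
  proof (cases "j = 0")
    case True then show ?thesis using M0 by (simp add: c_def)
  next
    case False
    then have "\<bar>c j\<bar> = w j / real j" using w0[of j] by (simp add: c_def)
    also have "\<dots> \<le> w j" using w0[of j] False by (simp add: divide_le_eq mult_le_cancel_left1 mult_le_cancel_left2)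
    also have "\<dots> \<le> M" using wM[of j] False by simp
    finally show ?thesis .
  qed
  have geo: "summable (\<lambda>n. M * \<bar>y\<bar> ^ n)" if "\<bar>y\<bar> < 1" for y :: real
    using that by (intro summable_mult summable_geometric) simp
  have c_sum: "summable (\<lambda>n. c n * y ^ n)" "summable (\<lambda>n. norm (c n * y ^ n))" if "\<bar>y\<bar> < 1" for y :: real
  proof -
    have "norm (c n * y ^ n) \<le> M * \<bar>y\<bar> ^ n" for n
      using cb[of n] by (simp add: abs_mult power_abs mult_right_mono)
    then show "summable (\<lambda>n. norm (c n * y ^ n))"
      by (intro summable_comparison_test[OF _ geo[OF that]]) auto
    then show "summable (\<lambda>n. c n * y ^ n)" by (rule summable_norm_cancel)
  qed
  have D_sum: "summable (\<lambda>n. norm (w (Suc n) * y ^ n))" if "\<bar>y\<bar> < 1" for y :: real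
  proof -
    have "norm (w (Suc n) * y ^ n) \<le> M * \<bar>y\<bar> ^ n" for n
      using w0[of "Suc n"] wM[of "Suc n"] by (simp add: abs_mult power_abs mult_right_mono)
    then show ?thesis
      by (intro summable_comparison_test[OF _ geo[OF that]]) auto
  qed
  have dS: "DERIV S y :> D y" if y: "\<bar>y\<bar> < 1" for y :: real
  proof -
    define K where "K = (1 + \<bar>y\<bar>) / 2"
    have K: "\<bar>y\<bar> < K" "\<bar>K\<bar> < 1" "norm y < norm K" using y unfolding K_def by auto
    have "DERIV S y :> (\<Sum>n. diffs c n * y ^ n)"
      unfolding S_def by (rule termdiffs_strong[OF c_sum(1)[OF K(2)] K(3)])
    moreover have "diffs c n = w (Suc n)" for n by (simp add: diffs_def c_def)
    ultimately show ?thesis unfolding D_def by simp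
  qed
  have dF: "DERIV F y :> D y * F y" if y: "\<bar>y\<bar> < 1" for y :: real
  proof -
    define K where "K = (1 + \<bar>y\<bar>) / 2"
    have K: "\<bar>y\<bar> < K" "\<bar>K\<bar> < 1" "norm y < norm K" using y unfolding K_def by auto
    have "DERIV F y :> (\<Sum>n. diffs (rr w) n * y ^ n)"
      unfolding F_def by (rule termdiffs_strong[OF rr_summable(1)[OF w0 wM K(2)] K(3)])
    moreover have "diffs (rr w) n = (\<Sum>k\<le>n. w (Suc k) * rr w (n - k))" for n
      by (simp add: diffs_def)
    moreover have "(\<Sum>n. (\<Sum>k\<le>n. w (Suc k) * rr w (n - k)) * y ^ n) = D y * F y"
    proof -
      have "D y * F y = (\<Sum>n. \<Sum>i\<le>n. (w (Suc i) * y ^ i) * (rr w (n - i) * y ^ (n - i)))"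
        unfolding D_def F_def
        by (rule Cauchy_product[OF D_sum[OF y] rr_summable(2)[OF w0 wM y]])
      also have "\<dots> = (\<Sum>n. (\<Sum>k\<le>n. w (Suc k) * rr w (n - k)) * y ^ n)"
      proof (rule suminf_cong)
        fix n
        have eq: "(w (Suc i) * y ^ i) * (rr w (n - i) * y ^ (n - i)) = w (Suc i) * rr w (n - i) * y ^ n"
          if "i \<in> {..n}" for i
        proof -
          have "y ^ i * y ^ (n - i) = y ^ n" using that by (simp add: power_add[symmetric])
          then show ?thesis by (metis mult.assoc mult.left_commute)
        qed
        show "(\<Sum>i\<le>n. (w (Suc i) * y ^ i) * (rr w (n - i) * y ^ (n - i))) = (\<Sum>k\<le>n. w (Suc k) * rr w (n - k)) * y ^ n"
          unfolding sum_distrib_right by (rule sum.cong[OF refl eq])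
      qed
      finally show ?thesis by simp
    qed
    ultimately show ?thesis by simp
  qed
  define G where "G y = F y * exp (- S y)" for y
  have dG: "(G has_field_derivative 0) (at y within {-1<..<1})" if "y \<in> {-1<..<1}" for y :: real
  proof -
    have y: "\<bar>y\<bar> < 1" using that by auto
    have "(G has_field_derivative (D y * F y * exp (- S y) + exp (- S y) * - D y * F y)) (at y)"
      unfolding G_def by (rule DERIV_mult[OF dF[OF y] DERIV_fun_exp[OF DERIV_minus[OF dS[OF y]]]])
    then have "(G has_field_derivative 0) (at y)" by (simp add: algebra_simps)
    then show ?thesis by (rule has_field_derivative_at_within)
  qed
  obtain k where k: "\<And>y. y \<in> {-1<..<1::real} \<Longrightarrow> G y = k"
    using has_field_derivative_zero_constant[OF convex_real_interval(8) dG] by blast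
  have "G 0 = 1" unfolding G_def F_def S_def using powser_zero[of "rr w"] powser_zero[of c]
    by (simp add: c_def)
  moreover have "x \<in> {-1<..<1}" using x by (simp add: abs_less_iff)
  ultimately have "G x = 1" using k[of 0] k[of x] by simp
  then have Fx: "F x = exp (S x)" unfolding G_def by (simp add: exp_minus field_simps)
  have "(\<Sum>j. w (Suc j) / real (Suc j) * x ^ Suc j) = S x"
  proof -
    have "(\<Sum>j. c (Suc j) * x ^ Suc j) = (\<Sum>j. c j * x ^ j) - c 0 * x ^ 0"
      by (rule suminf_split_head[OF c_sum(1)[OF x]])
    then show ?thesis unfolding S_def by (simp add: c_def)
  qed
  then show ?thesis using Fx unfolding F_def by simp
qed



lemma ln_sums:
  fixes t :: real assumes "0 \<le> t" "t < 1"
  shows "(\<lambda>j. t ^ Suc j / real (Suc j)) sums (- ln (1 - t))"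
proof -
  have s: "summable (\<lambda>j. t ^ Suc j / real (Suc j))"
  proof (rule summable_comparison_test[OF _ summable_geometric[of t]])
    show "\<exists>N. \<forall>n\<ge>N. norm (t ^ Suc n / real (Suc n)) \<le> t ^ n"
    proof (intro exI allI impI)
      fix n :: nat
      have "t ^ Suc n / real (Suc n) \<le> t ^ Suc n / 1" by (rule divide_left_mono) (use assms in auto)
      also have "\<dots> \<le> t ^ n" using assms by (simp add: mult_left_le_one_le)
      moreover have "0 \<le> t ^ Suc n / real (Suc n)" using assms by simp
      ultimately show "norm (t ^ Suc n / real (Suc n)) \<le> t ^ n" by simp
    qed
  qed (use assms in simp)
  have "ln (1 - t) = (\<Sum>n. (-1)^n * (1 / real (n + 1)) * ((1 - t) - 1)^(Suc n))"
    using assms by (intro ln_series) auto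
  also have "\<dots> = (\<Sum>n. - (t ^ Suc n / real (Suc n)))"
  proof (rule suminf_cong)
    fix n
    have "(-1::real)^n * (-t)^(Suc n) = - (t ^ Suc n)"
      by (simp add: power_minus[of t] mult.assoc[symmetric] power_add[symmetric])
    then show "(-1)^n * (1 / real (n + 1)) * ((1 - t) - 1)^(Suc n) = - (t ^ Suc n / real (Suc n))"
      by (simp add: field_simps)
  qed
  also have "\<dots> = - (\<Sum>n. t ^ Suc n / real (Suc n))" by (rule suminf_minus[OF s])
  finally show ?thesis using s by (simp add: summable_sums_iff)
qed

definition Phi :: "(nat \<Rightarrow> real) \<Rightarrow> real \<Rightarrow> real \<Rightarrow> real" where
  "Phi w th t = (\<Sum>j. (w (Suc j) - th) / real (Suc j) * t ^ Suc j)"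

lemma Lambda_Phi: "Lambda \<theta> th x = exp (Phi \<theta> th (1 - 1 / x))"
  unfolding Lambda_def Phi_def ..

lemma Phi_sums:
  assumes "\<And>j. j \<ge> 1 \<Longrightarrow> \<bar>w j - th\<bar> \<le> C" "\<bar>t\<bar> < 1"
  shows "(\<lambda>j. (w (Suc j) - th) / real (Suc j) * t ^ Suc j) sums Phi w th t"
    "summable (\<lambda>j. norm ((w (Suc j) - th) / real (Suc j) * t ^ Suc j))"
proof -
  have C0: "C \<ge> 0" using assms(1)[of 1] by simp
  have "norm ((w (Suc j) - th) / real (Suc j) * t ^ Suc j) \<le> C * \<bar>t\<bar> ^ j" for j
  proof -
    have "norm ((w (Suc j) - th) / real (Suc j) * t ^ Suc j) = \<bar>w (Suc j) - th\<bar> / real (Suc j) * \<bar>t\<bar> ^ Suc j"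
      by (simp add: abs_mult power_abs)
    also have "\<dots> \<le> C * 1 * \<bar>t\<bar> ^ j"
    proof (intro mult_mono)
      show "\<bar>w (Suc j) - th\<bar> / real (Suc j) \<le> C * 1"
        using assms(1)[of "Suc j"] C0 by (simp add: divide_le_eq) (smt (verit) mult_le_cancel_left1 of_nat_0_le_iff real_of_nat_ge_one_iff le_add1 Suc_eq_plus1)
      show "\<bar>t\<bar> ^ Suc j \<le> \<bar>t\<bar> ^ j" using assms(2) by (simp add: mult_left_le_one_le)
    qed (use C0 in auto)
    finally show ?thesis by simp
  qed
  note bnd = this
  have g: "summable (\<lambda>j. C * \<bar>t\<bar> ^ j)" by (intro summable_mult summable_geometric) (use assms(2) in simp)
  show s: "summable (\<lambda>j. norm ((w (Suc j) - th) / real (Suc j) * t ^ Suc j))"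
    by (rule summable_comparison_test[OF _ g]) (use bnd in auto)
  show "(\<lambda>j. (w (Suc j) - th) / real (Suc j) * t ^ Suc j) sums Phi w th t"
    unfolding Phi_def using summable_norm_cancel[OF s] by (simp add: summable_sums)
qed

lemma gf_main:
  assumes w0: "\<And>j. j \<ge> 1 \<Longrightarrow> w j \<ge> 0" and wM: "\<And>j. j \<ge> 1 \<Longrightarrow> w j \<le> M"
    and t: "0 \<le> t" "t < 1" and th: "th \<ge> 0"
  shows "(\<Sum>n. rr w n * t ^ n) = (1 - t) powr (- th) * exp (Phi w th t)"
proof -
  have b: "\<bar>w j - th\<bar> \<le> M + th" if "j \<ge> 1" for j using w0[OF that] wM[OF that] th by auto
  have s1: "(\<lambda>j. (w (Suc j) - th) / real (Suc j) * t ^ Suc j) sums Phi w th t"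
    using Phi_sums(1)[of w th "M + th" t] b t by auto
  have s2: "(\<lambda>j. th * (t ^ Suc j / real (Suc j))) sums (th * - ln (1 - t))"
    using ln_sums[OF t] by (rule sums_mult)
  have "(\<lambda>j. (w (Suc j) - th) / real (Suc j) * t ^ Suc j + th * (t ^ Suc j / real (Suc j)))
          sums (Phi w th t + th * - ln (1 - t))"
    by (rule sums_add[OF s1 s2])
  moreover have "(w (Suc j) - th) / real (Suc j) * t ^ Suc j + th * (t ^ Suc j / real (Suc j))
      = w (Suc j) / real (Suc j) * t ^ Suc j" for j
  proof -
    have k: "(a - b) / s * T + b * (T / s) = a / s * T" if "s > 0" for a b T s :: real
      using that by (simp add: field_simps)
    show ?thesis by (rule k) simp
  qed
  ultimately have "(\<Sum>j. w (Suc j) / real (Suc j) * t ^ Suc j) = Phi w th t + th * - ln (1 - t)"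
    by (simp add: sums_iff)
  moreover have "(\<Sum>n. rr w n * t ^ n) = exp (\<Sum>j. w (Suc j) / real (Suc j) * t ^ Suc j)"
    using rr_gf[OF w0 wM] t by simp
  ultimately have "(\<Sum>n. rr w n * t ^ n) = exp (Phi w th t) * exp (- th * ln (1 - t))"
    by (simp add: exp_add[symmetric])
  also have "exp (- th * ln (1 - t)) = (1 - t) powr (- th)" using t by (simp add: powr_def)
  finally show ?thesis by simp
qed



lemma rr_Suc_mult: "rr w (Suc m) * real (Suc m) = (\<Sum>k\<le>m. w (Suc k) * rr w (m - k))"
  by simp

lemma rr_Suc_le:
  assumes w0: "\<And>j. j \<ge> 1 \<Longrightarrow> w j \<ge> 0" and wM: "\<And>j. j \<ge> 1 \<Longrightarrow> w j \<le> M"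
  shows "rr w (Suc m) * real (Suc m) \<le> M * (\<Sum>k\<le>m. rr w k)"
proof -
  have "rr w (Suc m) * real (Suc m) = (\<Sum>k\<le>m. w (Suc k) * rr w (m - k))" by simp
  also have "\<dots> \<le> (\<Sum>k\<le>m. M * rr w (m - k))"
    by (intro sum_mono mult_right_mono wM rr_nonneg[OF w0]) auto
  also have "(\<Sum>k\<le>m. M * rr w (m - k)) = M * (\<Sum>k\<le>m. rr w k)"
  proof -
    have r: "(\<Sum>k\<le>m. rr w (m - k)) = (\<Sum>k\<le>m. rr w k)"
      by (rule sum.reindex_bij_witness[of _ "\<lambda>k. m - k" "\<lambda>k. m - k"]) auto
    show ?thesis by (simp add: sum_distrib_left[symmetric] r)
  qed
  finally show ?thesis .
qed

lemma card_between:
  fixes u v :: real assumes "0 \<le> u" "u < v"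
  shows "real (card {n::nat. u < real n \<and> real n < v}) \<le> v - u + 1"
proof -
  have sub: "{n::nat. u < real n \<and> real n < v} \<subseteq> {nat \<lfloor>u\<rfloor> + 1 .. nat \<lfloor>v\<rfloor>}"
  proof
    fix n assume n: "n \<in> {n::nat. u < real n \<and> real n < v}"
    then have "\<lfloor>u\<rfloor> < int n" by (simp add: floor_less_iff)
    then have "nat \<lfloor>u\<rfloor> < n" using assms(1) by (simp add: nat_less_iff)
    moreover have "int n \<le> \<lfloor>v\<rfloor>" using n by (simp add: le_floor_iff)
    ultimately show "n \<in> {nat \<lfloor>u\<rfloor> + 1 .. nat \<lfloor>v\<rfloor>}" by auto
  qed
  have "card {n::nat. u < real n \<and> real n < v} \<le> card {nat \<lfloor>u\<rfloor> + 1 .. nat \<lfloor>v\<rfloor>}"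
    by (rule card_mono[OF _ sub]) simp
  also have "\<dots> = nat \<lfloor>v\<rfloor> - nat \<lfloor>u\<rfloor>" by simp
  finally have 1: "real (card {n::nat. u < real n \<and> real n < v}) \<le> real (nat \<lfloor>v\<rfloor> - nat \<lfloor>u\<rfloor>)" by linarith
  have le: "nat \<lfloor>u\<rfloor> \<le> nat \<lfloor>v\<rfloor>" using assms by (simp add: floor_mono nat_mono)
  have 2: "real (nat \<lfloor>v\<rfloor> - nat \<lfloor>u\<rfloor>) = real (nat \<lfloor>v\<rfloor>) - real (nat \<lfloor>u\<rfloor>)"
    using le by (simp add: of_nat_diff)
  have "real (nat \<lfloor>v\<rfloor>) \<le> v" using assms by linarith
  moreover have "real (nat \<lfloor>u\<rfloor>) \<ge> u - 1" using assms by linarith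
  ultimately show ?thesis using 1 2 by linarith
qed

definition bb :: "real \<Rightarrow> nat \<Rightarrow> real" where "bb th = rr (\<lambda>_. th)"
definition Bs :: "real \<Rightarrow> nat \<Rightarrow> real" where "Bs th N = (\<Sum>n\<le>N. bb th n)"

lemma Bs_closed: "Bs th N = pochhammer (th + 1) N / fact N"
  unfolding Bs_def bb_def rr_const by (rule poch_hockey)

lemma Bs_asymp:
  assumes th: "th > 0"
  shows "(\<lambda>N. Bs th N / real N powr th) \<longlonglongrightarrow> 1 / Gamma (th + 1)"
proof -
  have G: "Gamma_series (th + 1) \<longlonglongrightarrow> Gamma (th + 1)" by (rule Gamma_series_LIMSEQ)
  have Gpos: "Gamma (th + 1) > 0" using th by (intro Gamma_real_pos) simp
  have l1: "(\<lambda>N. real N / (th + 1 + real N)) \<longlonglongrightarrow> 1" using th by real_asymp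
  have lim: "(\<lambda>N. real N / (th + 1 + real N) / Gamma_series (th + 1) N) \<longlonglongrightarrow> 1 / Gamma (th + 1)"
    by (rule tendsto_divide[OF l1 G]) (use Gpos in simp)
  have "eventually (\<lambda>N. real N / (th + 1 + real N) / Gamma_series (th + 1) N = Bs th N / real N powr th) sequentially"
  proof (rule eventually_sequentiallyI[of 1])
    fix N :: nat assume N: "N \<ge> 1"
    have Np: "real N > 0" using N by simp
    have pp: "pochhammer (th + 1) N > 0" using th by (intro pochhammer_pos) simp
    have e: "exp ((th + 1) * ln (real N)) = real N powr th * real N"
    proof -
      have "real N powr (th + 1) = exp ((th + 1) * ln (real N))" using Np by (simp add: powr_def)
      moreover have "real N powr (th + 1) = real N powr th * real N" using Np by (simp add: powr_add)
      ultimately show ?thesis by simp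
    qed
    have "Gamma_series (th + 1) N = fact N * (real N powr th * real N) / (pochhammer (th + 1) N * (th + 1 + real N))"
      unfolding Gamma_series_def using e by (simp add: pochhammer_Suc add_ac)
    moreover have key: "n / a / (F * (X * n) / (P * a)) = P / F / X"
      if "n > 0" "a > 0" "F > 0" "X > 0" "P > 0" for n a F X P :: real
      using that by (simp add: field_simps)
    ultimately show "real N / (th + 1 + real N) / Gamma_series (th + 1) N = Bs th N / real N powr th"
      unfolding Bs_closed using key[of "real N" "th + 1 + real N" "fact N" "real N powr th" "pochhammer (th + 1) N"]
        Np pp th by simp
  qed
  then show ?thesis by (rule Lim_transform_eventually[OF lim])
qed

lemma bb_nonneg: "th \<ge> 0 \<Longrightarrow> bb th n \<ge> 0"
  unfolding bb_def by (rule rr_nonneg) auto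

lemma Bs_mono: "th \<ge> 0 \<Longrightarrow> m \<le> n \<Longrightarrow> Bs th m \<le> Bs th n"
  unfolding Bs_def by (rule sum_mono2) (auto intro: bb_nonneg)

lemma bb_le: assumes "th \<ge> 0" "n \<ge> 1" shows "bb th n \<le> th * Bs th n / real n"
proof -
  obtain m where n: "n = Suc m" using assms(2) by (cases n) auto
  have "bb th (Suc m) * real (Suc m) \<le> th * (\<Sum>k\<le>m. bb th k)"
    unfolding bb_def by (rule rr_Suc_le) (use assms in auto)
  also have "\<dots> \<le> th * Bs th (Suc m)"
    using Bs_mono[OF assms(1), of m "Suc m"] assms(1) unfolding Bs_def by (simp add: mult_left_mono)
  finally show ?thesis using n by (simp add: field_simps)
qed

lemma window_bound:
  assumes th: "th > 0"
  shows "\<exists>Kb. \<forall>\<^sub>F N in sequentially. \<forall>\<delta>. 0 < \<delta> \<and> \<delta> \<le> 1/2 \<longrightarrow>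
     (\<Sum>n\<in>{n. real N * (1 - \<delta>) < real n \<and> real n < real N * (1 + \<delta>)}. bb th n)
        \<le> Kb * (\<delta> + 1 / real N) * real N powr th"
proof -
  define c where "c = 1 / Gamma (th + 1)"
  have l2: "(\<lambda>N. Bs th (2 * N) / real (2 * N) powr th) \<longlonglongrightarrow> c"
    using LIMSEQ_subseq_LIMSEQ[OF Bs_asymp[OF th], of "\<lambda>N. 2 * N"] unfolding c_def
    by (simp add: o_def strict_mono_def)
  then have ev: "\<forall>\<^sub>F N in sequentially. Bs th (2 * N) / real (2 * N) powr th < c + 1"
    by (rule order_tendstoD) simp
  define Kb where "Kb = 4 * th * (c + 1) * 2 powr th"
  show ?thesis
  proof (rule exI[of _ Kb])
    show "\<forall>\<^sub>F N in sequentially. \<forall>\<delta>. 0 < \<delta> \<and> \<delta> \<le> 1/2 \<longrightarrow>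
     (\<Sum>n\<in>{n. real N * (1 - \<delta>) < real n \<and> real n < real N * (1 + \<delta>)}. bb th n)
        \<le> Kb * (\<delta> + 1 / real N) * real N powr th"
      using ev eventually_gt_at_top[of 0]
    proof eventually_elim
      case (elim N)
      have Np: "real N > 0" using elim by simp
      have B2: "Bs th (2 * N) \<le> (c + 1) * 2 powr th * real N powr th"
      proof -
        have "real (2 * N) powr th = 2 powr th * real N powr th" by (simp add: powr_mult)
        moreover have "real (2 * N) powr th > 0" using Np by simp
        ultimately show ?thesis using elim(1) by (simp add: divide_less_eq mult_ac)
      qed
      show ?case
      proof (intro allI impI)
        fix \<delta> :: real assume d: "0 < \<delta> \<and> \<delta> \<le> 1/2"
        define W where "W = {n. real N * (1 - \<delta>) < real n \<and> real n < real N * (1 + \<delta>)}"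
        have cpos: "c > 0" unfolding c_def using Gamma_real_pos[of "th + 1"] th by simp
        have Bpos: "Bs th (2 * N) \<ge> 0"
          using th Bs_mono[OF less_imp_le[OF th], of 0 "2 * N"] by (simp add: Bs_def bb_def)
        have lo: "real N / 2 \<le> real N * (1 - \<delta>)"
        proof -
          have "real N * (1/2) \<le> real N * (1 - \<delta>)" by (rule mult_left_mono) (use d Np in auto)
          then show ?thesis by simp
        qed
        have hi: "real N * (1 + \<delta>) \<le> real N * 2" by (rule mult_left_mono) (use d Np in auto)
        have Wsub: "W \<subseteq> {..2 * N}"
        proof
          fix n assume "n \<in> W"
          then have "real n < real N * 2" using hi unfolding W_def by auto
          then show "n \<in> {..2 * N}" by simp
        qed
        have bW: "bb th n \<le> 2 * th * Bs th (2 * N) / real N" if "n \<in> W" for n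
        proof -
          have n1: "real n > real N / 2" using that lo unfolding W_def by auto
          have n2: "n \<le> 2 * N" using that Wsub by auto
          have "n \<ge> 1" using n1 Np by (cases n) auto
          then have "bb th n \<le> th * Bs th n / real n" by (rule bb_le[OF less_imp_le[OF th]])
          also have "\<dots> \<le> th * Bs th (2 * N) / real n"
            using Bs_mono[OF less_imp_le[OF th] n2] th by (simp add: divide_right_mono)
          also have "\<dots> \<le> th * Bs th (2 * N) / (real N / 2)"
            by (rule divide_left_mono) (use n1 Np th Bpos in auto)
          finally show ?thesis by (simp add: field_simps)
        qed
        have cW: "real (card W) \<le> 2 * \<delta> * real N + 1"
        proof -
          have "real N * (1 - \<delta>) < real N * (1 + \<delta>)" using d Np by simp
          then show ?thesis
            unfolding W_def using card_between[of "real N * (1 - \<delta>)" "real N * (1 + \<delta>)"] d Np lo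
            by (simp add: algebra_simps)
        qed
        have finW: "finite W" by (rule finite_subset[OF Wsub]) simp
        define Y where "Y = 2 * th * Bs th (2 * N)"
        have Y0: "Y \<ge> 0" unfolding Y_def using th Bpos by simp
        have "(\<Sum>n\<in>W. bb th n) \<le> (\<Sum>n\<in>W. Y / real N)"
          by (rule sum_mono) (use bW Y_def in auto)
        also have "\<dots> = real (card W) * (Y / real N)" by simp
        also have "\<dots> \<le> (2 * \<delta> * real N + 1) * (Y / real N)"
          by (rule mult_right_mono[OF cW]) (use Y0 Np in simp)
        also have "\<dots> = (2 * \<delta> + 1 / real N) * Y"
          using Np by (simp add: field_simps)
        also have "\<dots> \<le> (2 * \<delta> + 1 / real N) * (2 * th * ((c + 1) * 2 powr th * real N powr th))"
          unfolding Y_def by (rule mult_left_mono) (use B2 th d Np in auto)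
        also have "\<dots> \<le> (2 * \<delta> + 2 / real N) * (2 * th * ((c + 1) * 2 powr th * real N powr th))"
        proof (rule mult_right_mono)
          show "2 * \<delta> + 1 / real N \<le> 2 * \<delta> + 2 / real N" using Np by (simp add: divide_right_mono)
          show "0 \<le> 2 * th * ((c + 1) * 2 powr th * real N powr th)" using th cpos by simp
        qed
        also have "\<dots> = Kb * (\<delta> + 1 / real N) * real N powr th"
          unfolding Kb_def by (simp add: field_simps)
        finally show "(\<Sum>n\<in>{n. real N * (1 - \<delta>) < real n \<and> real n < real N * (1 + \<delta>)}. bb th n)
            \<le> Kb * (\<delta> + 1 / real N) * real N powr th" unfolding W_def .
      qed
    qed
  qed
qed



lemma ln_diff_sum:
  fixes a b :: real assumes "0 \<le> a" "a \<le> b" "b < 1"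
  shows "(\<lambda>j. (b ^ Suc j - a ^ Suc j) / real (Suc j)) sums (ln ((1 - a) / (1 - b)))"
proof -
  have "(\<lambda>j. b ^ Suc j / real (Suc j) - a ^ Suc j / real (Suc j)) sums (- ln (1 - b) - - ln (1 - a))"
    using assms by (intro sums_diff ln_sums) auto
  moreover have "- ln (1 - b) - - ln (1 - a) = ln ((1 - a) / (1 - b))"
    using assms by (simp add: ln_div)
  ultimately show ?thesis by (simp add: diff_divide_distrib)
qed

lemma SV:
  assumes lim: "w \<longlonglongrightarrow> th" and C: "\<And>j. j \<ge> 1 \<Longrightarrow> \<bar>w j - th\<bar> \<le> C"
    and u3: "u \<longlonglongrightarrow> 1" and v3: "v \<longlonglongrightarrow> 1"
    and rng: "\<forall>\<^sub>F N in sequentially. 0 \<le> u N \<and> u N < 1 \<and> 0 \<le> v N \<and> v N < 1"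
    and K: "K \<ge> 1" "\<forall>\<^sub>F N in sequentially. 1 - u N \<le> K * (1 - v N) \<and> 1 - v N \<le> K * (1 - u N)"
  shows "(\<lambda>N. Phi w th (u N) - Phi w th (v N)) \<longlonglongrightarrow> 0"
proof (rule tendstoI)
  fix \<epsilon> :: real assume \<epsilon>: "\<epsilon> > 0"
  define e where "e = \<epsilon> / (2 * (ln K + 1))"
  have lnK: "ln K \<ge> 0" using K by simp
  have e0: "e > 0" unfolding e_def using \<epsilon> lnK by simp
  have "\<forall>\<^sub>F j in sequentially. dist (w j) th < e" using lim e0 by (rule tendstoD)
  then obtain J where J: "\<And>j. j \<ge> J \<Longrightarrow> \<bar>w j - th\<bar> < e"
    by (auto simp: eventually_sequentially dist_real_def)
  define c where "c j = (w (Suc j) - th) / real (Suc j)" for j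
  define fin where "fin N = (\<Sum>j<J. \<bar>c j\<bar> * \<bar>u N ^ Suc j - v N ^ Suc j\<bar>)" for N
  have fin0: "fin \<longlonglongrightarrow> 0"
  proof -
    have "fin \<longlonglongrightarrow> (\<Sum>j<J. \<bar>c j\<bar> * \<bar>1 ^ Suc j - 1 ^ Suc j\<bar>)"
      unfolding fin_def by (intro tendsto_intros u3 v3)
    then show ?thesis by simp
  qed
  have ev1: "\<forall>\<^sub>F N in sequentially. fin N < \<epsilon> / 2"
    using fin0 \<epsilon> by (intro order_tendstoD) auto
  show "\<forall>\<^sub>F N in sequentially. dist (Phi w th (u N) - Phi w th (v N)) 0 < \<epsilon>"
    using ev1 K(2) rng
  proof eventually_elim
    case (elim N)
    have u: "0 \<le> u N" "u N < 1" and v: "0 \<le> v N" "v N < 1" using elim(3) by auto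
    define a where "a = min (u N) (v N)"
    define b where "b = max (u N) (v N)"
    have ab: "0 \<le> a" "a \<le> b" "b < 1" unfolding a_def b_def using u v by auto
    have ratio: "(1 - a) / (1 - b) \<le> K"
    proof -
      have "1 - a \<le> K * (1 - b)" unfolding a_def b_def using elim(2) by (auto simp: min_def max_def)
      then show ?thesis using ab by (simp add: divide_le_eq mult_ac)
    qed
    have pos: "(1 - a) / (1 - b) > 0" using ab by simp
    have su: "(\<lambda>j. c j * u N ^ Suc j) sums Phi w th (u N)"
      using Phi_sums(1)[of w th C "u N"] C u unfolding c_def by auto
    have sv: "(\<lambda>j. c j * v N ^ Suc j) sums Phi w th (v N)"
      using Phi_sums(1)[of w th C "v N"] C v unfolding c_def by auto
    have nsu: "summable (\<lambda>j. norm (c j * u N ^ Suc j))"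
      using Phi_sums(2)[of w th C "u N"] C u unfolding c_def by auto
    have nsv: "summable (\<lambda>j. norm (c j * v N ^ Suc j))"
      using Phi_sums(2)[of w th C "v N"] C v unfolding c_def by auto
    define f where "f j = c j * (u N ^ Suc j - v N ^ Suc j)" for j
    have sf: "f sums (Phi w th (u N) - Phi w th (v N))"
      using sums_diff[OF su sv] unfolding f_def by (simp add: algebra_simps)
    have nsf: "summable (\<lambda>j. norm (f j))"
    proof (rule summable_comparison_test[OF _ summable_add[OF nsu nsv]])
      show "\<exists>N'. \<forall>n\<ge>N'. norm (norm (f n)) \<le> norm (c n * u N ^ Suc n) + norm (c n * v N ^ Suc n)"
        unfolding f_def by (auto simp: right_diff_distrib abs_triangle_ineq4)
    qed
    define d where "d j = (b ^ Suc j - a ^ Suc j) / real (Suc j)" for j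
    have sd: "d sums ln ((1 - a) / (1 - b))" unfolding d_def by (rule ln_diff_sum[OF ab])
    define g where "g j = (if j < J then \<bar>c j\<bar> * \<bar>u N ^ Suc j - v N ^ Suc j\<bar> else 0)" for j
    have sg: "g sums fin N" unfolding g_def fin_def
      by (rule sums_If_finite_set'[where A="{..<J}", simplified]) (use sums_0 in auto)
    have absdiff: "\<bar>u N ^ Suc j - v N ^ Suc j\<bar> = b ^ Suc j - a ^ Suc j" for j
    proof (cases "u N \<le> v N")
      case True
      then have "u N ^ Suc j \<le> v N ^ Suc j" using u by (intro power_mono) auto
      then show ?thesis using True unfolding a_def b_def by (simp add: min_def max_def)
    next
      case False
      then have "v N ^ Suc j \<le> u N ^ Suc j" using v by (intro power_mono) auto
      then show ?thesis using False unfolding a_def b_def by (simp add: min_def max_def)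
    qed
    have fle: "norm (f j) \<le> g j + e * d j" for j
    proof (cases "j < J")
      case True
      have "a ^ Suc j \<le> b ^ Suc j" using ab by (intro power_mono) auto
      then have "0 \<le> d j" unfolding d_def by simp
      then show ?thesis using True unfolding f_def g_def by (simp add: abs_mult e0 less_imp_le)
    next
      case False
      have "\<bar>c j\<bar> \<le> e / real (Suc j)" unfolding c_def
        using J[of "Suc j"] False by (simp add: divide_right_mono)
      then have "\<bar>c j\<bar> * \<bar>u N ^ Suc j - v N ^ Suc j\<bar> \<le> e / real (Suc j) * \<bar>u N ^ Suc j - v N ^ Suc j\<bar>"
        by (rule mult_right_mono) simp
      moreover have "norm (f j) = \<bar>c j\<bar> * \<bar>u N ^ Suc j - v N ^ Suc j\<bar>"
        unfolding f_def by (simp only: real_norm_def abs_mult)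
      ultimately show ?thesis using False unfolding g_def d_def absdiff by simp
    qed
    have "\<bar>Phi w th (u N) - Phi w th (v N)\<bar> = norm (\<Sum>j. f j)" using sf by (simp add: sums_iff)
    also have "\<dots> \<le> (\<Sum>j. norm (f j))" by (rule summable_norm[OF nsf])
    also have "\<dots> \<le> (\<Sum>j. g j + e * d j)"
      by (rule suminf_le[OF fle nsf]) (intro summable_add sums_summable[OF sg] summable_mult sums_summable[OF sd])
    also have "\<dots> = fin N + e * ln ((1 - a) / (1 - b))"
      using sums_unique[OF sums_add[OF sg sums_mult[OF sd, of e]]] by simp
    also have "\<dots> < \<epsilon> / 2 + e * (ln K + 1)"
    proof -
      have "ln ((1 - a) / (1 - b)) \<le> ln K" using ratio pos K by simp
      then have "e * ln ((1 - a) / (1 - b)) < e * (ln K + 1)" using e0 by simp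
      then show ?thesis using elim(1) by simp
    qed
    also have "\<dots> = \<epsilon>" unfolding e_def using lnK by (simp add: field_simps)
    finally show ?case by (simp add: dist_real_def)
  qed
qed



lemma KP:
  assumes w0: "\<And>j. j \<ge> 1 \<Longrightarrow> w j \<ge> 0" and wM: "\<And>j. j \<ge> 1 \<Longrightarrow> w j \<le> M"
    and lim: "w \<longlonglongrightarrow> th" and th: "th > 0"
  shows "(\<lambda>N. (\<Sum>n. rr w n * exp (-(real k + 1) / real N) ^ n) /
            (real N powr th * exp (Phi w th (1 - 1 / real N)))) \<longlonglongrightarrow> (real k + 1) powr (- th)"
proof -
  define t where "t N = exp (-(real k + 1) / real N)" for N :: nat
  define v where "v N = 1 - 1 / real N" for N :: nat
  define X where "X N = real N * (1 - t N)" for N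
  have Xl: "X \<longlonglongrightarrow> real k + 1" unfolding X_def t_def by real_asymp
  have tl: "t \<longlonglongrightarrow> 1" unfolding t_def by real_asymp
  have vl: "v \<longlonglongrightarrow> 1" unfolding v_def by real_asymp
  have C: "\<bar>w j - th\<bar> \<le> M + th" if "j \<ge> 1" for j using w0[OF that] wM[OF that] th by auto
  have evX1: "\<forall>\<^sub>F N in sequentially. X N < real k + 2" using Xl by (rule order_tendstoD) simp
  have evX2: "\<forall>\<^sub>F N in sequentially. X N > 1/2" using Xl by (rule order_tendstoD) simp
  have rng: "\<forall>\<^sub>F N in sequentially. 0 \<le> t N \<and> t N < 1 \<and> 0 \<le> v N \<and> v N < 1"
    using eventually_gt_at_top[of 0]
  proof eventually_elim
    case (elim N)
    then have a: "-(real k + 1) / real N < 0" by (simp add: divide_neg_pos)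
    have b: "1 / real N \<le> 1" "1 / real N > 0" using elim by auto
    show ?case using a b by (auto simp: t_def v_def)
  qed
  have Kc: "\<forall>\<^sub>F N in sequentially. 1 - t N \<le> (real k + 2) * (1 - v N) \<and> 1 - v N \<le> (real k + 2) * (1 - t N)"
    using evX1 evX2 eventually_gt_at_top[of 0]
  proof eventually_elim
    case (elim N)
    have Np: "real N > 0" using elim by simp
    have "1 - t N = X N / real N" unfolding X_def using Np by simp
    moreover have "1 - v N = 1 / real N" unfolding v_def by simp
    moreover have "X N / real N \<le> (real k + 2) * (1 / real N)" using elim(1) Np by (simp add: divide_right_mono)
    moreover have "1 / real N \<le> (real k + 2) * (X N / real N)"
    proof -
      have "1 \<le> (real k + 2) * X N"
      proof -
        have "(real k + 2) * X N \<ge> 2 * (1/2)" using elim(2) by (intro mult_mono) auto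
        then show ?thesis by simp
      qed
      then show ?thesis using Np by (simp add: divide_right_mono)
    qed
    ultimately show ?case by simp
  qed
  have sv: "(\<lambda>N. Phi w th (t N) - Phi w th (v N)) \<longlonglongrightarrow> 0"
    by (rule SV[OF lim C tl vl rng _ Kc]) auto
  have lim2: "(\<lambda>N. X N powr (- th) * exp (Phi w th (t N) - Phi w th (v N))) \<longlonglongrightarrow> (real k + 1) powr (- th) * exp 0"
    by (intro tendsto_intros Xl sv) auto
  have "\<forall>\<^sub>F N in sequentially. X N powr (- th) * exp (Phi w th (t N) - Phi w th (v N)) =
       (\<Sum>n. rr w n * exp (-(real k + 1) / real N) ^ n) / (real N powr th * exp (Phi w th (1 - 1 / real N)))"
    using eventually_gt_at_top[of 0] rng
  proof eventually_elim
    case (elim N)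
    have Np: "real N > 0" using elim by simp
    have t1: "0 \<le> t N" "t N < 1" using elim by auto
    have "(\<Sum>n. rr w n * exp (-(real k + 1) / real N) ^ n) = (1 - t N) powr (- th) * exp (Phi w th (t N))"
      using gf_main[OF w0 wM t1] th unfolding t_def by simp
    moreover have "X N powr (- th) = (1 - t N) powr (- th) / real N powr th"
    proof -
      have "X N powr (- th) = real N powr (- th) * (1 - t N) powr (- th)"
        unfolding X_def using Np t1 by (simp add: powr_mult)
      then show ?thesis by (simp add: powr_minus field_simps)
    qed
    ultimately show ?case unfolding v_def by (simp add: exp_diff field_simps)
  qed
  then show ?thesis using Lim_transform_eventually[OF lim2] by simp
qed

lemma Phi_const: "Phi (\<lambda>_. th) th t = 0"
  unfolding Phi_def by simp

lemma KP_bb: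
  assumes th: "th > 0"
  shows "(\<lambda>N. (\<Sum>n. bb th n * exp (-(real k + 1) / real N) ^ n) / real N powr th) \<longlonglongrightarrow> (real k + 1) powr (- th)"
  using KP[of "\<lambda>_. th" th, OF _ _ _ th] th unfolding bb_def Phi_const by simp



lemma poly_shift:
  "(\<Sum>k\<le>n. (a k + (if k = 0 then c else 0)) * (x::real) ^ Suc k) = x * ((\<Sum>k\<le>n. a k * x ^ k) + c)"
proof -
  have d: "(\<Sum>k\<le>n. (if k = 0 then c else 0) * x ^ Suc k) = c * x" by (induction n) auto
  have "(\<Sum>k\<le>n. (a k + (if k = 0 then c else 0)) * x ^ Suc k)
      = (\<Sum>k\<le>n. a k * x ^ Suc k) + (\<Sum>k\<le>n. (if k = 0 then c else 0) * x ^ Suc k)"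
    by (simp add: distrib_right sum.distrib)
  also have "(\<Sum>k\<le>n. a k * x ^ Suc k) = x * (\<Sum>k\<le>n. a k * x ^ k)"
    by (simp add: sum_distrib_left mult_ac)
  finally show ?thesis using d by (simp add: algebra_simps)
qed

lemma approx_poly:
  assumes "continuous_on {0..1} (\<psi>::real \<Rightarrow> real)" "\<eta> > 0"
  obtains a n where "\<And>x. x \<in> {0..1} \<Longrightarrow> \<bar>\<psi> x - (\<Sum>i\<le>n. a i * x ^ i)\<bar> < \<eta>"
proof -
  obtain g where g: "real_polynomial_function g" "\<And>x. x \<in> {0..1} \<Longrightarrow> \<bar>\<psi> x - g x\<bar> < \<eta>"
    using Stone_Weierstrass_real_polynomial_function[OF compact_Icc assms(1,2)] by blast
  then obtain a n where "g = (\<lambda>x. \<Sum>i\<le>n. a i * x ^ i)"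
    using real_polynomial_function_iff_sum by blast
  then show ?thesis using g(2) that by blast
qed

lemma SP:
  fixes \<eta> \<delta> :: real
  assumes \<eta>: "\<eta> > 0" and \<delta>: "0 < \<delta>" "\<delta> \<le> 1/2"
  obtains p m q m' where
    "\<And>x. x \<in> {0..1} \<Longrightarrow> (\<Sum>k\<le>m'. q k * x ^ Suc k) \<le> (if exp (-1) \<le> x then 1 else 0)"
    "\<And>x. x \<in> {0..1} \<Longrightarrow> (if exp (-1) \<le> x then 1 else 0) \<le> (\<Sum>k\<le>m. p k * x ^ Suc k)"
    "\<And>x. x \<in> {0..1} \<Longrightarrow> (\<Sum>k\<le>m. p k * x ^ Suc k) - (\<Sum>k\<le>m'. q k * x ^ Suc k)
        \<le> 4 * \<eta> * x + (if exp (-1-\<delta>) < x \<and> x < exp (-1+\<delta>) then 1 else 0)"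
proof -
  define \<alpha> where "\<alpha> = exp (-1-\<delta>)"
  define e1 where "e1 = exp (-1::real)"
  define \<beta> where "\<beta> = exp (-1+\<delta>)"
  have ord: "0 < \<alpha>" "\<alpha> < e1" "e1 < \<beta>" "\<beta> < 1"
    unfolding \<alpha>_def e1_def \<beta>_def using \<delta> by auto
  define \<phi>p where "\<phi>p x = max 0 (min 1 ((x - \<alpha>) / (e1 - \<alpha>)))" for x :: real
  define \<phi>m where "\<phi>m x = max 0 (min 1 ((x - e1) / (\<beta> - e1)))" for x :: real
  define \<psi>p where "\<psi>p x = \<phi>p x / max x (\<alpha> / 2)" for x :: real
  define \<psi>m where "\<psi>m x = \<phi>m x / max x (\<alpha> / 2)" for x :: real
  have den: "max x (\<alpha> / 2) > 0" for x using ord by simp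
  have cp: "continuous_on {0..1} \<psi>p" unfolding \<psi>p_def \<phi>p_def
    by (intro continuous_intros) (use den ord in \<open>auto simp: less_imp_neq[symmetric]\<close>)
  have cm: "continuous_on {0..1} \<psi>m" unfolding \<psi>m_def \<phi>m_def
    by (intro continuous_intros) (use den ord in \<open>auto simp: less_imp_neq[symmetric]\<close>)
  obtain a n where a: "\<And>x. x \<in> {0..1} \<Longrightarrow> \<bar>\<psi>p x - (\<Sum>i\<le>n. a i * x ^ i)\<bar> < \<eta>"
    using approx_poly[OF cp \<eta>] by blast
  obtain a' n' where a': "\<And>x. x \<in> {0..1} \<Longrightarrow> \<bar>\<psi>m x - (\<Sum>i\<le>n'. a' i * x ^ i)\<bar> < \<eta>"
    using approx_poly[OF cm \<eta>] by blast
  define p where "p k = a k + (if k = 0 then \<eta> else 0)" for k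
  define q where "q k = a' k + (if k = 0 then - \<eta> else 0)" for k
  have fp: "(\<Sum>k\<le>n. p k * x ^ Suc k) = x * ((\<Sum>k\<le>n. a k * x ^ k) + \<eta>)" for x
    unfolding p_def by (rule poly_shift)
  have fq: "(\<Sum>k\<le>n'. q k * x ^ Suc k) = x * ((\<Sum>k\<le>n'. a' k * x ^ k) - \<eta>)" for x
    unfolding q_def using poly_shift[where a=a' and c="- \<eta>" and n=n' and x=x] by simp
  have xpp: "x * \<psi>p x = \<phi>p x" if "x \<in> {0..1}" for x
  proof (cases "x \<ge> \<alpha> / 2")
    case True
    have m: "max x (\<alpha> / 2) = x" using True by (simp add: max_def)
    have "x > 0" using True ord by linarith
    then show ?thesis unfolding \<psi>p_def m by simp
  next
    case False
    then have "\<phi>p x = 0" unfolding \<phi>p_def using ord that by (auto simp: divide_le_0_iff)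
    then show ?thesis unfolding \<psi>p_def by simp
  qed
  have xpm: "x * \<psi>m x = \<phi>m x" if "x \<in> {0..1}" for x
  proof (cases "x \<ge> \<alpha> / 2")
    case True
    have m: "max x (\<alpha> / 2) = x" using True by (simp add: max_def)
    have "x > 0" using True ord by linarith
    then show ?thesis unfolding \<psi>m_def m by simp
  next
    case False
    then have "\<phi>m x = 0" unfolding \<phi>m_def using ord that by (auto simp: divide_le_0_iff)
    then show ?thesis unfolding \<psi>m_def by simp
  qed
  have main: "(\<Sum>k\<le>n'. q k * x ^ Suc k) \<le> (if exp (-1) \<le> x then 1 else 0) \<and>
    (if exp (-1) \<le> x then 1 else 0) \<le> (\<Sum>k\<le>n. p k * x ^ Suc k) \<and>
    (\<Sum>k\<le>n. p k * x ^ Suc k) - (\<Sum>k\<le>n'. q k * x ^ Suc k)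
        \<le> 4 * \<eta> * x + (if exp (-1-\<delta>) < x \<and> x < exp (-1+\<delta>) then 1 else 0)"
    if x: "x \<in> {0..1}" for x
  proof -
    have x0: "x \<ge> 0" using x by simp
    have ind_p: "(if e1 \<le> x then 1 else 0) \<le> \<phi>p x"
    proof (cases "e1 \<le> x")
      case True
      then have "(x - \<alpha>) / (e1 - \<alpha>) \<ge> 1" using ord by (simp add: le_divide_eq)
      then show ?thesis using True unfolding \<phi>p_def by simp
    qed (simp add: \<phi>p_def)
    have ind_m: "\<phi>m x \<le> (if e1 \<le> x then 1 else 0)"
    proof (cases "e1 \<le> x")
      case False
      then have "(x - e1) / (\<beta> - e1) \<le> 0" using ord by (simp add: divide_le_0_iff)
      then show ?thesis using False unfolding \<phi>m_def by simp
    qed (simp add: \<phi>m_def)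
    have up: "\<phi>p x \<le> (\<Sum>k\<le>n. p k * x ^ Suc k)"
    proof -
      have "\<psi>p x \<le> (\<Sum>k\<le>n. a k * x ^ k) + \<eta>" using a[OF x] by linarith
      then have "x * \<psi>p x \<le> x * ((\<Sum>k\<le>n. a k * x ^ k) + \<eta>)" using x0 by (rule mult_left_mono)
      then show ?thesis using xpp[OF x] fp by simp
    qed
    have lo: "(\<Sum>k\<le>n'. q k * x ^ Suc k) \<le> \<phi>m x"
    proof -
      have "(\<Sum>k\<le>n'. a' k * x ^ k) - \<eta> \<le> \<psi>m x" using a'[OF x] by linarith
      then have "x * ((\<Sum>k\<le>n'. a' k * x ^ k) - \<eta>) \<le> x * \<psi>m x" using x0 by (rule mult_left_mono)
      then show ?thesis using xpm[OF x] fq by simp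
    qed
    have s1: "(\<Sum>k\<le>n'. q k * x ^ Suc k) \<le> (if exp (-1) \<le> x then 1 else 0)"
      using lo ind_m unfolding e1_def by linarith
    have s2: "(if exp (-1) \<le> x then 1 else 0) \<le> (\<Sum>k\<le>n. p k * x ^ Suc k)"
      using up ind_p unfolding e1_def by linarith
    have win: "\<phi>p x - \<phi>m x \<le> (if \<alpha> < x \<and> x < \<beta> then 1 else 0)"
    proof (cases "\<alpha> < x \<and> x < \<beta>")
      case True
      have "\<phi>p x \<le> 1" "\<phi>m x \<ge> 0" unfolding \<phi>p_def \<phi>m_def by auto
      then show ?thesis using True by simp
    next
      case False
      then consider "x \<le> \<alpha>" | "x \<ge> \<beta>" by linarith
      then show ?thesis
      proof cases
        case 1
        then have "(x - \<alpha>) / (e1 - \<alpha>) \<le> 0" using ord by (simp add: divide_le_0_iff)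
        then have "\<phi>p x = 0" unfolding \<phi>p_def by simp
        moreover have "\<phi>m x \<ge> 0" unfolding \<phi>m_def by simp
        ultimately show ?thesis by simp
      next
        case 2
        then have "(x - e1) / (\<beta> - e1) \<ge> 1" using ord by (simp add: le_divide_eq)
        then have "\<phi>m x = 1" unfolding \<phi>m_def by simp
        moreover have "\<phi>p x \<le> 1" unfolding \<phi>p_def by simp
        ultimately show ?thesis by simp
      qed
    qed
    have "(\<Sum>k\<le>n. p k * x ^ Suc k) - (\<Sum>k\<le>n'. q k * x ^ Suc k)
        = x * ((\<Sum>k\<le>n. a k * x ^ k) - (\<Sum>k\<le>n'. a' k * x ^ k) + 2 * \<eta>)"
      unfolding fp fq by (simp add: algebra_simps)
    also have "\<dots> \<le> x * (\<psi>p x - \<psi>m x + 4 * \<eta>)"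
      using a[OF x] a'[OF x] x0 by (intro mult_left_mono) auto
    also have "\<dots> = \<phi>p x - \<phi>m x + 4 * \<eta> * x"
      using xpp[OF x] xpm[OF x] by (simp add: algebra_simps)
    also have "\<dots> \<le> 4 * \<eta> * x + (if exp (-1-\<delta>) < x \<and> x < exp (-1+\<delta>) then 1 else 0)"
      using win unfolding \<alpha>_def \<beta>_def by simp
    finally have s3: "(\<Sum>k\<le>n. p k * x ^ Suc k) - (\<Sum>k\<le>n'. q k * x ^ Suc k)
        \<le> 4 * \<eta> * x + (if exp (-1-\<delta>) < x \<and> x < exp (-1+\<delta>) then 1 else 0)" .
    show ?thesis using s1 s2 s3 by blast
  qed
  show ?thesis by (rule that[of q n' p n]) (use main in blast)+
qed



lemma exp_pow_swap: "exp (- real n / real N) ^ Suc k = exp (-(real k + 1) / real N) ^ n"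
proof -
  have "exp (- real n / real N) ^ Suc k = exp (real (Suc k) * (- real n / real N))"
    by (rule exp_of_nat_mult[symmetric])
  also have "\<dots> = exp (real n * (-(real k + 1) / real N))" by (simp add: divide_simps algebra_simps)
  also have "\<dots> = exp (-(real k + 1) / real N) ^ n" by (rule exp_of_nat_mult)
  finally show ?thesis .
qed

lemma tN_range: "N > 0 \<Longrightarrow> 0 \<le> exp (-(real k + 1) / real N) \<and> exp (-(real k + 1) / real N) < 1"
  by (simp add: divide_neg_pos)

lemma poly_sum_eq:
  assumes ssum: "\<And>t. 0 \<le> t \<Longrightarrow> t < 1 \<Longrightarrow> summable (\<lambda>n. s n * t ^ n)" and N: "N > 0"
  shows "summable (\<lambda>n. s n * (\<Sum>k\<le>m. p k * exp (- real n / real N) ^ Suc k))"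
    "(\<Sum>n. s n * (\<Sum>k\<le>m. p k * exp (- real n / real N) ^ Suc k))
       = (\<Sum>k\<le>m. p k * (\<Sum>n. s n * exp (-(real k + 1) / real N) ^ n))"
proof -
  have eq: "s n * (\<Sum>k\<le>m. p k * exp (- real n / real N) ^ Suc k)
      = (\<Sum>k\<le>m. p k * (s n * exp (-(real k + 1) / real N) ^ n))" for n
    unfolding sum_distrib_left exp_pow_swap by (simp only: mult_ac)
  have sk': "summable (\<lambda>n. s n * exp (-(real k + 1) / real N) ^ n)" for k
    using ssum tN_range[OF N, of k] by auto
  have sk: "summable (\<lambda>n. p k * (s n * exp (-(real k + 1) / real N) ^ n))" for k
    using sk' by (intro summable_mult)
  show "summable (\<lambda>n. s n * (\<Sum>k\<le>m. p k * exp (- real n / real N) ^ Suc k))"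
    unfolding eq by (intro summable_sum sk)
  show "(\<Sum>n. s n * (\<Sum>k\<le>m. p k * exp (- real n / real N) ^ Suc k))
       = (\<Sum>k\<le>m. p k * (\<Sum>n. s n * exp (-(real k + 1) / real N) ^ n))"
    unfolding eq suminf_sum[OF sk] suminf_mult[OF sk'] ..
qed

lemma poly_lim:
  assumes ssum: "\<And>t. 0 \<le> t \<Longrightarrow> t < 1 \<Longrightarrow> summable (\<lambda>n. s n * t ^ n)"
    and KP: "\<And>k. (\<lambda>N. (\<Sum>n. s n * exp (-(real k + 1) / real N) ^ n) / D N) \<longlonglongrightarrow> (real k + 1) powr (- th)"
  shows "(\<lambda>N. (\<Sum>n. s n * (\<Sum>k\<le>m. p k * exp (- real n / real N) ^ Suc k)) / D N)
           \<longlonglongrightarrow> (\<Sum>k\<le>m. p k * (real k + 1) powr (- th))"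
proof -
  have l: "(\<lambda>N. \<Sum>k\<le>m. p k * ((\<Sum>n. s n * exp (-(real k + 1) / real N) ^ n) / D N))
        \<longlonglongrightarrow> (\<Sum>k\<le>m. p k * (real k + 1) powr (- th))"
    by (intro tendsto_sum tendsto_mult tendsto_const KP)
  have "\<forall>\<^sub>F N in sequentially. (\<Sum>k\<le>m. p k * ((\<Sum>n. s n * exp (-(real k + 1) / real N) ^ n) / D N))
      = (\<Sum>n. s n * (\<Sum>k\<le>m. p k * exp (- real n / real N) ^ Suc k)) / D N"
    using eventually_gt_at_top[of 0]
  proof eventually_elim
    case (elim N)
    have e: "(\<Sum>n. s n * (\<Sum>k\<le>m. p k * exp (- real n / real N) ^ Suc k))
       = (\<Sum>k\<le>m. p k * (\<Sum>n. s n * exp (-(real k + 1) / real N) ^ n))"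
      by (rule poly_sum_eq(2)[OF ssum elim])
    show ?case by (simp only: e sum_divide_distrib times_divide_eq_right)
  qed
  then show ?thesis by (rule Lim_transform_eventually[OF l])
qed

lemma ind_eq:
  assumes "N > 0"
  shows "(exp (-1) \<le> exp (- real n / real N)) \<longleftrightarrow> n \<le> N"
proof -
  have "(exp (-1) \<le> exp (- real n / real N)) \<longleftrightarrow> real n / real N \<le> 1" by simp
  also have "\<dots> \<longleftrightarrow> n \<le> N" using assms by (simp add: divide_le_eq)
  finally show ?thesis .
qed

lemma win_eq:
  assumes "N > 0"
  shows "(exp (-1-\<delta>) < exp (- real n / real N) \<and> exp (- real n / real N) < exp (-1+\<delta>))
     \<longleftrightarrow> (real N * (1 - \<delta>) < real n \<and> real n < real N * (1 + \<delta>))"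
proof -
  have Np: "real N > 0" using assms by simp
  have "(exp (-1-\<delta>) < exp (- real n / real N)) \<longleftrightarrow> real n / real N < 1 + \<delta>" by simp (rule iffI; linarith)
  also have "\<dots> \<longleftrightarrow> real n < real N * (1 + \<delta>)" using Np by (simp add: divide_less_eq mult.commute)
  finally have 1: "(exp (-1-\<delta>) < exp (- real n / real N)) \<longleftrightarrow> real n < real N * (1 + \<delta>)" .
  have "(exp (- real n / real N) < exp (-1+\<delta>)) \<longleftrightarrow> 1 - \<delta> < real n / real N" by simp (rule iffI; linarith)
  also have "\<dots> \<longleftrightarrow> real N * (1 - \<delta>) < real n" using Np by (simp add: less_divide_eq mult.commute)
  finally have 2: "(exp (- real n / real N) < exp (-1+\<delta>)) \<longleftrightarrow> real N * (1 - \<delta>) < real n" .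
  show ?thesis using 1 2 by blast
qed

lemma partial_as_suminf:
  "(\<Sum>n. s n * (if n \<le> N then 1 else 0)) = (\<Sum>n\<le>N. (s n :: real))"
  "summable (\<lambda>n. s n * (if n \<le> N then 1 else 0 :: real))"
proof -
  show "(\<Sum>n. s n * (if n \<le> N then 1 else 0)) = (\<Sum>n\<le>N. (s n :: real))"
    by (subst suminf_finite[of "{..N}"]) auto
  show "summable (\<lambda>n. s n * (if n \<le> N then 1 else 0 :: real))"
    by (rule summable_finite[of "{..N}"]) auto
qed



lemma xn_range: "N > 0 \<Longrightarrow> exp (- real n / real N) \<in> {0..1}"
  by (auto simp: divide_nonneg_pos)

lemma ind_sandwich:
  assumes s0: "\<And>n. s n \<ge> 0" and ssum: "\<And>t. 0 \<le> t \<Longrightarrow> t < 1 \<Longrightarrow> summable (\<lambda>n. s n * t ^ n)"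
    and N: "N > 0"
    and P1: "\<And>x. x \<in> {0..1} \<Longrightarrow> (\<Sum>k\<le>m'. q k * x ^ Suc k) \<le> (if exp (-1) \<le> x then 1 else 0)"
    and P2: "\<And>x. x \<in> {0..1} \<Longrightarrow> (if exp (-1) \<le> x then 1 else 0) \<le> (\<Sum>k\<le>m. p k * x ^ Suc k)"
  shows "(\<Sum>n. s n * (\<Sum>k\<le>m'. q k * exp (- real n / real N) ^ Suc k)) \<le> (\<Sum>n\<le>N. s n)"
    "(\<Sum>n\<le>N. s n) \<le> (\<Sum>n. s n * (\<Sum>k\<le>m. p k * exp (- real n / real N) ^ Suc k))"
proof -
  have ind: "(if exp (-1) \<le> exp (- real n / real N) then 1 else 0) = (if n \<le> N then 1 else (0::real))" for n
    using ind_eq[OF N, of n] by simp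
  have e: "(\<Sum>n\<le>N. s n) = (\<Sum>n. s n * (if n \<le> N then 1 else 0))" by (rule partial_as_suminf(1)[symmetric])
  show "(\<Sum>n. s n * (\<Sum>k\<le>m'. q k * exp (- real n / real N) ^ Suc k)) \<le> (\<Sum>n\<le>N. s n)"
    unfolding e
  proof (rule suminf_le)
    fix n show "s n * (\<Sum>k\<le>m'. q k * exp (- real n / real N) ^ Suc k) \<le> s n * (if n \<le> N then 1 else 0)"
      using P1[OF xn_range[OF N, of n]] s0[of n] unfolding ind by (intro mult_left_mono) auto
  qed (use poly_sum_eq(1)[OF ssum N] partial_as_suminf(2) in auto)
  show "(\<Sum>n\<le>N. s n) \<le> (\<Sum>n. s n * (\<Sum>k\<le>m. p k * exp (- real n / real N) ^ Suc k))"
    unfolding e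
  proof (rule suminf_le)
    fix n show "s n * (if n \<le> N then 1 else 0) \<le> s n * (\<Sum>k\<le>m. p k * exp (- real n / real N) ^ Suc k)"
      using P2[OF xn_range[OF N, of n]] s0[of n] unfolding ind by (intro mult_left_mono) auto
  qed (use poly_sum_eq(1)[OF ssum N] partial_as_suminf(2) in auto)
qed

lemma TAU:
  fixes a b Da Db :: "nat \<Rightarrow> real" and th c Kb :: real
  assumes a0: "\<And>n. a n \<ge> 0" and b0: "\<And>n. b n \<ge> 0"
    and asum: "\<And>t. 0 \<le> t \<Longrightarrow> t < 1 \<Longrightarrow> summable (\<lambda>n. a n * t ^ n)"
    and bsum: "\<And>t. 0 \<le> t \<Longrightarrow> t < 1 \<Longrightarrow> summable (\<lambda>n. b n * t ^ n)"
    and Dapos: "\<forall>\<^sub>F N in sequentially. Da N > 0" and Dbpos: "\<forall>\<^sub>F N in sequentially. Db N > 0"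
    and KPa: "\<And>k. (\<lambda>N. (\<Sum>n. a n * exp (-(real k + 1) / real N) ^ n) / Da N) \<longlonglongrightarrow> (real k + 1) powr (- th)"
    and KPb: "\<And>k. (\<lambda>N. (\<Sum>n. b n * exp (-(real k + 1) / real N) ^ n) / Db N) \<longlonglongrightarrow> (real k + 1) powr (- th)"
    and Bl: "(\<lambda>N. (\<Sum>n\<le>N. b n) / Db N) \<longlonglongrightarrow> c"
    and win: "\<forall>\<^sub>F N in sequentially. \<forall>\<delta>. 0 < \<delta> \<and> \<delta> \<le> 1/2 \<longrightarrow>
       (\<Sum>n\<in>{n. real N * (1 - \<delta>) < real n \<and> real n < real N * (1 + \<delta>)}. b n) \<le> Kb * (\<delta> + 1 / real N) * Db N"
  shows "(\<lambda>N. (\<Sum>n\<le>N. a n) / Da N) \<longlonglongrightarrow> c"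
proof (rule tendstoI)
  fix \<epsilon> :: real assume \<epsilon>: "\<epsilon> > 0"
  define \<eta> where "\<eta> = \<epsilon> / 16"
  define \<delta> where "\<delta> = min (1/2) (\<epsilon> / (4 * (\<bar>Kb\<bar> + 1)))"
  have \<eta>0: "\<eta> > 0" unfolding \<eta>_def using \<epsilon> by simp
  have \<delta>0: "0 < \<delta>" "\<delta> \<le> 1/2" unfolding \<delta>_def using \<epsilon> by (auto simp: min_def)
  have \<delta>K: "\<bar>Kb\<bar> * \<delta> \<le> \<epsilon> / 4"
  proof -
    have "\<delta> \<le> \<epsilon> / (4 * (\<bar>Kb\<bar> + 1))" unfolding \<delta>_def by simp
    then have "\<bar>Kb\<bar> * \<delta> \<le> \<bar>Kb\<bar> * (\<epsilon> / (4 * (\<bar>Kb\<bar> + 1)))" by (rule mult_left_mono) simp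
    also have "\<dots> \<le> (\<bar>Kb\<bar> + 1) * (\<epsilon> / (4 * (\<bar>Kb\<bar> + 1)))" using \<epsilon> by (intro mult_right_mono) auto
    also have "\<dots> = \<epsilon> / 4" by (simp add: field_simps)
    finally show ?thesis .
  qed
  obtain q m' p m where
    P1: "\<And>x. x \<in> {0..1} \<Longrightarrow> (\<Sum>k\<le>m'. q k * x ^ Suc k) \<le> (if exp (-1) \<le> x then 1 else 0)" and
    P2: "\<And>x. x \<in> {0..1} \<Longrightarrow> (if exp (-1) \<le> x then 1 else 0) \<le> (\<Sum>k\<le>m. p k * x ^ Suc k)" and
    P3: "\<And>x. x \<in> {0..1} \<Longrightarrow> (\<Sum>k\<le>m. p k * x ^ Suc k) - (\<Sum>k\<le>m'. q k * x ^ Suc k)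
        \<le> 4 * \<eta> * x + (if exp (-1-\<delta>) < x \<and> x < exp (-1+\<delta>) then 1 else 0)"
    by (rule SP[OF \<eta>0 \<delta>0]) (rule that)
  define fP where "fP s N = (\<Sum>n. s n * (\<Sum>k\<le>m. p k * exp (- real n / real N) ^ Suc k))" for s :: "nat \<Rightarrow> real" and N :: nat
  define fQ where "fQ s N = (\<Sum>n. s n * (\<Sum>k\<le>m'. q k * exp (- real n / real N) ^ Suc k))" for s :: "nat \<Rightarrow> real" and N :: nat
  define \<mu>p where "\<mu>p = (\<Sum>k\<le>m. p k * (real k + 1) powr (- th))"
  define \<mu>q where "\<mu>q = (\<Sum>k\<le>m'. q k * (real k + 1) powr (- th))"
  have LPa: "(\<lambda>N. fP a N / Da N) \<longlonglongrightarrow> \<mu>p" unfolding fP_def \<mu>p_def by (rule poly_lim[OF asum KPa])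
  have LQa: "(\<lambda>N. fQ a N / Da N) \<longlonglongrightarrow> \<mu>q" unfolding fQ_def \<mu>q_def by (rule poly_lim[OF asum KPa])
  have LPb: "(\<lambda>N. fP b N / Db N) \<longlonglongrightarrow> \<mu>p" unfolding fP_def \<mu>p_def by (rule poly_lim[OF bsum KPb])
  have LQb: "(\<lambda>N. fQ b N / Db N) \<longlonglongrightarrow> \<mu>q" unfolding fQ_def \<mu>q_def by (rule poly_lim[OF bsum KPb])
  have SWa1: "fQ a N \<le> (\<Sum>n\<le>N. a n)" if N: "N > 0" for N
    unfolding fQ_def by (rule ind_sandwich(1)[where s=a and p=p and m=m]) (fact a0 asum N P1 P2)+
  have SWa2: "(\<Sum>n\<le>N. a n) \<le> fP a N" if N: "N > 0" for N
    unfolding fP_def by (rule ind_sandwich(2)[where s=a and q=q and m'=m']) (fact a0 asum N P1 P2)+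
  have SWb1: "fQ b N \<le> (\<Sum>n\<le>N. b n)" if N: "N > 0" for N
    unfolding fQ_def by (rule ind_sandwich(1)[where s=b and p=p and m=m]) (fact b0 bsum N P1 P2)+
  have SWb2: "(\<Sum>n\<le>N. b n) \<le> fP b N" if N: "N > 0" for N
    unfolding fP_def by (rule ind_sandwich(2)[where s=b and q=q and m'=m']) (fact b0 bsum N P1 P2)+
  have c_le: "c \<le> \<mu>p"
  proof (rule tendsto_le[OF _ LPb Bl])
    show "\<forall>\<^sub>F N in sequentially. (\<Sum>n\<le>N. b n) / Db N \<le> fP b N / Db N"
      using Dbpos eventually_gt_at_top[of 0]
      by eventually_elim (use SWb2 in \<open>auto intro!: divide_right_mono\<close>)
  qed simp
  have le_c: "\<mu>q \<le> c"
  proof (rule tendsto_le[OF _ Bl LQb])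
    show "\<forall>\<^sub>F N in sequentially. fQ b N / Db N \<le> (\<Sum>n\<le>N. b n) / Db N"
      using Dbpos eventually_gt_at_top[of 0]
      by eventually_elim (use SWb1 in \<open>auto intro!: divide_right_mono\<close>)
  qed simp
  have gap: "\<mu>p - \<mu>q \<le> 4 * \<eta> + \<bar>Kb\<bar> * \<delta>"
  proof -
    have l1: "(\<lambda>N. fP b N / Db N - fQ b N / Db N) \<longlonglongrightarrow> \<mu>p - \<mu>q" by (intro tendsto_diff LPb LQb)
    have K0: "(\<lambda>N. (\<Sum>n. b n * exp (-(real 0 + 1) / real N) ^ n) / Db N) \<longlonglongrightarrow> (real 0 + 1) powr (- th)"
      by (rule KPb)
    have l2: "(\<lambda>N. 4 * \<eta> * ((\<Sum>n. b n * exp (-(real 0 + 1) / real N) ^ n) / Db N) + \<bar>Kb\<bar> * (\<delta> + 1 / real N))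
        \<longlonglongrightarrow> 4 * \<eta> * 1 + \<bar>Kb\<bar> * (\<delta> + 0)"
      using K0 by (intro tendsto_intros) (auto intro: lim_inverse_n')
    have "\<mu>p - \<mu>q \<le> 4 * \<eta> * 1 + \<bar>Kb\<bar> * (\<delta> + 0)"
    proof (rule tendsto_le[OF _ l2 l1])
      show "\<forall>\<^sub>F N in sequentially. fP b N / Db N - fQ b N / Db N
          \<le> 4 * \<eta> * ((\<Sum>n. b n * exp (-(real 0 + 1) / real N) ^ n) / Db N) + \<bar>Kb\<bar> * (\<delta> + 1 / real N)"
        using Dbpos eventually_gt_at_top[of 0] win
      proof eventually_elim
        case (elim N)
        have N: "N > 0" and Dp: "Db N > 0" using elim by auto
        define W where "W = {n. real N * (1 - \<delta>) < real n \<and> real n < real N * (1 + \<delta>)}"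
        have finW: "finite W"
        proof (rule finite_subset)
          show "W \<subseteq> {..nat \<lceil>real N * (1 + \<delta>)\<rceil>}" unfolding W_def by (auto simp: le_nat_iff) linarith
        qed simp
        have wi: "(if exp (-1-\<delta>) < exp (- real n / real N) \<and> exp (- real n / real N) < exp (-1+\<delta>) then 1 else 0)
            = (if n \<in> W then 1 else (0::real))" for n
          unfolding W_def using win_eq[OF N, of \<delta> n] by simp
        have xn: "exp (- real n / real N) = exp (-(real 0 + 1) / real N) ^ n" for n
          using exp_pow_swap[of n N 0] by simp
        have sP: "summable (\<lambda>n. b n * (\<Sum>k\<le>m. p k * exp (- real n / real N) ^ Suc k))"
          by (rule poly_sum_eq(1)[OF bsum N])
        have sQ: "summable (\<lambda>n. b n * (\<Sum>k\<le>m'. q k * exp (- real n / real N) ^ Suc k))"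
          by (rule poly_sum_eq(1)[OF bsum N])
        have s1: "summable (\<lambda>n. b n * exp (-(real 0 + 1) / real N) ^ n)"
          using bsum tN_range[OF N, of 0] by simp
        have s2: "summable (\<lambda>n. b n * (if n \<in> W then 1 else 0))"
          by (rule summable_finite[OF finW]) auto
        have "fP b N - fQ b N = (\<Sum>n. b n * ((\<Sum>k\<le>m. p k * exp (- real n / real N) ^ Suc k)
                   - (\<Sum>k\<le>m'. q k * exp (- real n / real N) ^ Suc k)))"
          unfolding fP_def fQ_def using suminf_diff[OF sP sQ] by (simp add: right_diff_distrib)
        also have "\<dots> \<le> (\<Sum>n. 4 * \<eta> * (b n * exp (-(real 0 + 1) / real N) ^ n) + b n * (if n \<in> W then 1 else 0))"
        proof (rule suminf_le)
          fix n
          have "b n * ((\<Sum>k\<le>m. p k * exp (- real n / real N) ^ Suc k) - (\<Sum>k\<le>m'. q k * exp (- real n / real N) ^ Suc k))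
              \<le> b n * (4 * \<eta> * exp (- real n / real N) + (if n \<in> W then 1 else 0))"
            using P3[OF xn_range[OF N, of n]] b0[of n] unfolding wi by (intro mult_left_mono) auto
          then show "b n * ((\<Sum>k\<le>m. p k * exp (- real n / real N) ^ Suc k) - (\<Sum>k\<le>m'. q k * exp (- real n / real N) ^ Suc k))
              \<le> 4 * \<eta> * (b n * exp (-(real 0 + 1) / real N) ^ n) + b n * (if n \<in> W then 1 else 0)"
            unfolding xn by (simp add: algebra_simps)
        next
          show "summable (\<lambda>n. b n * ((\<Sum>k\<le>m. p k * exp (- real n / real N) ^ Suc k) - (\<Sum>k\<le>m'. q k * exp (- real n / real N) ^ Suc k)))"
            using summable_diff[OF sP sQ] by (simp add: right_diff_distrib)
          show "summable (\<lambda>n. 4 * \<eta> * (b n * exp (-(real 0 + 1) / real N) ^ n) + b n * (if n \<in> W then 1 else 0))"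
            by (intro summable_add summable_mult s1 s2)
        qed
        also have "\<dots> = 4 * \<eta> * (\<Sum>n. b n * exp (-(real 0 + 1) / real N) ^ n) + (\<Sum>n\<in>W. b n)"
        proof -
          have "(\<Sum>n. b n * (if n \<in> W then 1 else 0)) = (\<Sum>n\<in>W. b n)"
            by (subst suminf_finite[OF finW]) auto
          then show ?thesis using suminf_add[OF summable_mult[OF s1, of "4 * \<eta>"] s2] suminf_mult[OF s1, of "4 * \<eta>"]
            by simp
        qed
        also have "\<dots> \<le> 4 * \<eta> * (\<Sum>n. b n * exp (-(real 0 + 1) / real N) ^ n) + \<bar>Kb\<bar> * (\<delta> + 1 / real N) * Db N"
        proof -
          have "(\<Sum>n\<in>W. b n) \<le> Kb * (\<delta> + 1 / real N) * Db N" using elim(3) \<delta>0 unfolding W_def by blast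
          also have "\<dots> \<le> \<bar>Kb\<bar> * (\<delta> + 1 / real N) * Db N"
            using \<delta>0 Dp by (intro mult_right_mono) auto
          finally show ?thesis by simp
        qed
        finally have "fP b N - fQ b N \<le> 4 * \<eta> * (\<Sum>n. b n * exp (-(real 0 + 1) / real N) ^ n) + \<bar>Kb\<bar> * (\<delta> + 1 / real N) * Db N" .
        then have "(fP b N - fQ b N) / Db N \<le> (4 * \<eta> * (\<Sum>n. b n * exp (-(real 0 + 1) / real N) ^ n) + \<bar>Kb\<bar> * (\<delta> + 1 / real N) * Db N) / Db N"
          using Dp by (intro divide_right_mono) auto
        then show ?case using Dp by (simp add: diff_divide_distrib add_divide_distrib)
      qed
    qed simp
    then show ?thesis by simp
  qed
  have g2: "4 * \<eta> + \<bar>Kb\<bar> * \<delta> \<le> \<epsilon> / 2" using \<delta>K unfolding \<eta>_def by simp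
  have evP: "\<forall>\<^sub>F N in sequentially. fP a N / Da N < \<mu>p + \<epsilon> / 4"
    using LPa \<epsilon> by (intro order_tendstoD) auto
  have evQ: "\<forall>\<^sub>F N in sequentially. fQ a N / Da N > \<mu>q - \<epsilon> / 4"
    using LQa \<epsilon> by (intro order_tendstoD) auto
  show "\<forall>\<^sub>F N in sequentially. dist ((\<Sum>n\<le>N. a n) / Da N) c < \<epsilon>"
    using evP evQ Dapos eventually_gt_at_top[of 0]
  proof eventually_elim
    case (elim N)
    have N: "N > 0" and Dp: "Da N > 0" using elim by auto
    have u: "(\<Sum>n\<le>N. a n) / Da N \<le> fP a N / Da N"
      using SWa2[OF N] Dp by (intro divide_right_mono) auto
    have l: "fQ a N / Da N \<le> (\<Sum>n\<le>N. a n) / Da N"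
      using SWa1[OF N] Dp by (intro divide_right_mono) auto
    show ?case using u l elim(1,2) c_le le_c gap g2 by (simp add: dist_real_def abs_less_iff)
  qed
qed



lemma rr_conv:
  assumes "N \<ge> 1"
  shows "real N * rr w N = (\<Sum>j<N. w (N - j) * rr w j)"
proof -
  obtain m where N: "N = Suc m" using assms by (cases N) auto
  have "real N * rr w N = (\<Sum>k\<le>m. w (Suc k) * rr w (m - k))" unfolding N using rr_Suc_mult[of w m] by (simp add: mult.commute)
  also have "\<dots> = (\<Sum>j\<le>m. w (Suc (m - j)) * rr w j)"
    by (rule sum.reindex_bij_witness[of _ "\<lambda>k. m - k" "\<lambda>k. m - k"]) auto
  also have "\<dots> = (\<Sum>j<N. w (N - j) * rr w j)" unfolding N
    by (rule sum.cong) (auto simp: Suc_diff_le)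
  finally show ?thesis .
qed

lemma ratio_lim:
  assumes w0: "\<And>j. j \<ge> 1 \<Longrightarrow> w j \<ge> 0" and wM: "\<And>j. j \<ge> 1 \<Longrightarrow> w j \<le> M"
    and lim: "w \<longlonglongrightarrow> th" and th: "th > 0"
  shows "(\<lambda>N. real N * rr w N / (\<Sum>j\<le>N. rr w j)) \<longlonglongrightarrow> th"
proof (rule tendstoI)
  fix \<epsilon> :: real assume \<epsilon>: "\<epsilon> > 0"
  define H where "H N = (\<Sum>j\<le>N. rr w j)" for N
  have M0: "M \<ge> 0" using w0[of 1] wM[of 1] by simp
  define C where "C = M + th"
  have C: "\<bar>w j - th\<bar> \<le> C" if "j \<ge> 1" for j using w0[OF that] wM[OF that] th unfolding C_def by auto
  have C0: "C \<ge> 0" unfolding C_def using M0 th by simp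
  have rr0: "rr w j \<ge> 0" for j by (rule rr_nonneg[OF w0])
  have Hpos: "H N \<ge> 1" for N
  proof -
    have "rr w 0 \<le> H N" unfolding H_def using rr0 by (intro member_le_sum) auto
    then show ?thesis by simp
  qed
  have Hmono: "H j \<le> H N" if "j \<le> N" for j N unfolding H_def using that rr0 by (intro sum_mono2) auto
  have rr_le: "rr w j \<le> M * H N / real j" if jj: "1 \<le> j" "j \<le> N" for j N
  proof -
    obtain m where j: "j = Suc m" using jj by (cases j) auto
    have "rr w (Suc m) * real (Suc m) \<le> M * (\<Sum>k\<le>m. rr w k)" by (rule rr_Suc_le[OF w0 wM])
    also have "(\<Sum>k\<le>m. rr w k) \<le> H N" using Hmono[of m N] jj j unfolding H_def by simp
    then have "M * (\<Sum>k\<le>m. rr w k) \<le> M * H N" using M0 by (rule mult_left_mono)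
    finally show ?thesis using j by (simp add: field_simps)
  qed
  define e where "e = \<epsilon> / 2"
  have e0: "e > 0" unfolding e_def using \<epsilon> by simp
  have "\<forall>\<^sub>F j in sequentially. dist (w j) th < e" using lim e0 by (rule tendstoD)
  then obtain J0 where J0: "\<And>j. j \<ge> J0 \<Longrightarrow> \<bar>w j - th\<bar> < e"
    by (auto simp: eventually_sequentially dist_real_def)
  define J where "J = Suc J0"
  have J: "\<And>j. j \<ge> J \<Longrightarrow> \<bar>w j - th\<bar> < e" "J \<ge> 1" using J0 unfolding J_def by auto
  define B where "B = 2 * real J * C * M + th * M"
  have B0: "B \<ge> 0" unfolding B_def using C0 M0 th by simp
  have ev: "\<forall>\<^sub>F N in sequentially. B / real N < e"
  proof -
    have "(\<lambda>N. B / real N) \<longlonglongrightarrow> 0" by (rule lim_const_over_n)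
    then show ?thesis using e0 by (intro order_tendstoD) auto
  qed
  show "\<forall>\<^sub>F N in sequentially. dist (real N * rr w N / (\<Sum>j\<le>N. rr w j)) th < \<epsilon>"
    using ev eventually_ge_at_top[of "2 * J"]
  proof eventually_elim
    case (elim N)
    have N1: "N \<ge> 1" using elim J by simp
    have Np: "real N > 0" using N1 by simp
    have HN: "H N > 0" using Hpos[of N] by simp
    have split: "th * H N = (\<Sum>j<N. th * rr w j) + th * rr w N"
      unfolding H_def by (simp add: lessThan_Suc_atMost[symmetric] sum_distrib_left distrib_left)
    have diff: "real N * rr w N - th * H N = (\<Sum>j<N. (w (N - j) - th) * rr w j) - th * rr w N"
      unfolding rr_conv[OF N1] split by (simp add: sum_subtractf left_diff_distrib)
    have trm: "\<bar>(w (N - j) - th) * rr w j\<bar> \<le> e * rr w j + (if N - J \<le> j then C * (2 * M * H N / real N) else 0)"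
      if j: "j < N" for j
    proof (cases "N - J \<le> j")
      case True
      have "\<bar>(w (N - j) - th) * rr w j\<bar> = \<bar>w (N - j) - th\<bar> * rr w j" using rr0[of j] by (simp add: abs_mult)
      also have "\<dots> \<le> C * rr w j" using C[of "N - j"] j rr0[of j] by (intro mult_right_mono) auto
      also have "\<dots> \<le> C * (2 * M * H N / real N)"
      proof (rule mult_left_mono[OF _ C0])
        have j1: "1 \<le> j" using True elim(2) J by linarith
        have "rr w j \<le> M * H N / real j" using rr_le[OF j1] j by simp
        also have "\<dots> \<le> M * H N / (real N / 2)"
        proof (rule divide_left_mono)
          show "real N / 2 \<le> real j" using True elim(2) by linarith
        qed (use M0 HN j1 Np in auto)
        finally show "rr w j \<le> 2 * M * H N / real N" by (simp add: field_simps)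
      qed
      moreover have "e * rr w j \<ge> 0" using e0 rr0[of j] by simp
      ultimately show ?thesis using True by simp
    next
      case False
      have "J \<le> N - j" using False by linarith
      then have "\<bar>w (N - j) - th\<bar> < e" by (rule J(1))
      then have "\<bar>w (N - j) - th\<bar> * rr w j \<le> e * rr w j" using rr0[of j] by (intro mult_right_mono) auto
      then show ?thesis using False rr0[of j] by (simp add: abs_mult)
    qed
    have "\<bar>\<Sum>j<N. (w (N - j) - th) * rr w j\<bar> \<le> (\<Sum>j<N. \<bar>(w (N - j) - th) * rr w j\<bar>)" by (rule sum_abs)
    also have "\<dots> \<le> (\<Sum>j<N. e * rr w j + (if N - J \<le> j then C * (2 * M * H N / real N) else 0))"
      by (rule sum_mono) (use trm in auto)
    also have "\<dots> = e * (\<Sum>j<N. rr w j) + real J * (C * (2 * M * H N / real N))"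
    proof -
      have "(\<Sum>j<N. (if N - J \<le> j then C * (2 * M * H N / real N) else 0))
          = (\<Sum>j\<in>{..<N} \<inter> {j. N - J \<le> j}. C * (2 * M * H N / real N)) + (\<Sum>j\<in>{..<N} \<inter> - {j. N - J \<le> j}. 0)"
        by (rule sum.If_cases) simp
      also have "{..<N} \<inter> {j. N - J \<le> j} = {N - J..<N}" by auto
      finally have "(\<Sum>j<N. (if N - J \<le> j then C * (2 * M * H N / real N) else 0)) = real J * (C * (2 * M * H N / real N))"
        using elim(2) by simp
      then show ?thesis by (simp add: sum.distrib sum_distrib_left)
    qed
    also have "\<dots> \<le> e * H N + real J * (C * (2 * M * H N / real N))"
    proof -
      have "(\<Sum>j<N. rr w j) \<le> H N" unfolding H_def using rr0 by (intro sum_mono2) auto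
      then show ?thesis using e0 by simp
    qed
    finally have A: "\<bar>\<Sum>j<N. (w (N - j) - th) * rr w j\<bar> \<le> e * H N + real J * (C * (2 * M * H N / real N))" .
    have Bt: "th * rr w N \<le> th * (M * H N / real N)" using rr_le[OF N1 order_refl] th by (intro mult_left_mono) auto
    have "\<bar>real N * rr w N - th * H N\<bar> \<le> e * H N + real J * (C * (2 * M * H N / real N)) + th * (M * H N / real N)"
    proof -
      have "\<bar>(\<Sum>j<N. (w (N - j) - th) * rr w j) - th * rr w N\<bar> \<le> \<bar>\<Sum>j<N. (w (N - j) - th) * rr w j\<bar> + \<bar>th * rr w N\<bar>"
        by (rule abs_triangle_ineq4)
      moreover have "\<bar>th * rr w N\<bar> = th * rr w N" using th rr0[of N] by simp
      ultimately show ?thesis unfolding diff using A Bt by linarith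
    qed
    also have "\<dots> = (e + B / real N) * H N" unfolding B_def using Np by (simp add: field_simps)
    finally have "\<bar>real N * rr w N - th * H N\<bar> / H N \<le> e + B / real N"
      using HN by (simp add: divide_le_eq)
    moreover have "\<bar>real N * rr w N - th * H N\<bar> / H N = \<bar>real N * rr w N / H N - th\<bar>"
      using HN by (simp add: field_simps abs_div_pos[symmetric])
    moreover have "e + B / real N < \<epsilon>" using elim(1) unfolding e_def by linarith
    ultimately have "\<bar>real N * rr w N / H N - th\<bar> < \<epsilon>" by linarith
    then show ?case unfolding H_def dist_real_def .
  qed
qed



theorem proposition6p3:
  fixes \<theta> :: "nat \<Rightarrow> real" and th :: real
  assumes "\<And>j. j \<ge> 1 \<Longrightarrow> \<theta> j \<ge> 0"
    and "\<theta> \<longlonglongrightarrow> th"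
    and "th > 0"
  shows "(\<lambda>n. hseq \<theta> n) \<sim>[at_top]
           (\<lambda>n. real n powr (th - 1) / Gamma th * Lambda \<theta> th (real n))"
proof -
  note w0 = assms(1) and lim = assms(2) and th = assms(3)
  obtain M where M: "\<And>j. norm (\<theta> j) \<le> M"
    using convergent_imp_Bseq[OF convergentI[OF lim]] by (metis BseqE)
  have wM: "\<theta> j \<le> M" if "j \<ge> 1" for j using M[of j] by simp
  define Da where "Da N = real N powr th * exp (Phi \<theta> th (1 - 1 / real N))" for N :: nat
  define c where "c = 1 / Gamma (th + 1)"
  obtain Kb where win: "\<forall>\<^sub>F N in sequentially. \<forall>\<delta>. 0 < \<delta> \<and> \<delta> \<le> 1/2 \<longrightarrow>
     (\<Sum>n\<in>{n. real N * (1 - \<delta>) < real n \<and> real n < real N * (1 + \<delta>)}. bb th n)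
        \<le> Kb * (\<delta> + 1 / real N) * real N powr th"
    using window_bound[OF th] by blast
  have T: "(\<lambda>N. (\<Sum>n\<le>N. rr \<theta> n) / Da N) \<longlonglongrightarrow> c"
  proof (rule TAU[where b = "bb th" and Db = "\<lambda>N. real N powr th" and th = th and Kb = Kb])
    show "\<And>n. rr \<theta> n \<ge> 0" by (rule rr_nonneg[OF w0])
    show "\<And>n. bb th n \<ge> 0" using th by (intro bb_nonneg) simp
    show "summable (\<lambda>n. rr \<theta> n * t ^ n)" if "0 \<le> t" "t < 1" for t
      using that by (intro rr_summable(1)[OF w0 wM]) auto
    show "summable (\<lambda>n. bb th n * t ^ n)" if "0 \<le> t" "t < 1" for t
      unfolding bb_def using that th by (intro rr_summable(1)[of _ th]) auto
    show "\<forall>\<^sub>F N in sequentially. Da N > 0"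
      using eventually_gt_at_top[of 0] by eventually_elim (simp add: Da_def)
    show "\<forall>\<^sub>F N in sequentially. real N powr th > 0"
      using eventually_gt_at_top[of 0] by eventually_elim simp
    show "(\<lambda>N. (\<Sum>n. rr \<theta> n * exp (-(real k + 1) / real N) ^ n) / Da N) \<longlonglongrightarrow> (real k + 1) powr (- th)" for k
      unfolding Da_def by (rule KP[OF w0 wM lim th])
    show "(\<lambda>N. (\<Sum>n. bb th n * exp (-(real k + 1) / real N) ^ n) / real N powr th) \<longlonglongrightarrow> (real k + 1) powr (- th)" for k
      by (rule KP_bb[OF th])
    show "(\<lambda>N. (\<Sum>n\<le>N. bb th n) / real N powr th) \<longlonglongrightarrow> c"
      using Bs_asymp[OF th] unfolding Bs_def c_def .
  qed (rule win)
  have R: "(\<lambda>N. real N * rr \<theta> N / (\<Sum>j\<le>N. rr \<theta> j)) \<longlonglongrightarrow> th"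
    by (rule ratio_lim[OF w0 wM lim th])
  have Gpos: "Gamma th > 0" using th by (rule Gamma_real_pos)
  have lim3: "(\<lambda>N. (real N * rr \<theta> N / (\<Sum>j\<le>N. rr \<theta> j)) * ((\<Sum>n\<le>N. rr \<theta> n) / Da N) * Gamma th)
      \<longlonglongrightarrow> th * c * Gamma th"
    by (intro tendsto_intros R T)
  have "th \<notin> \<int>\<^sub>\<le>\<^sub>0" using th nonpos_Ints_nonpos by force
  then have G1: "Gamma (th + 1) = th * Gamma th" by (rule Gamma_plus1)
  have one: "th * c * Gamma th = 1" unfolding c_def G1 using Gpos th by (simp add: less_imp_neq[symmetric])
  show ?thesis
  proof (rule asymp_equivI')
    have "\<forall>\<^sub>F N in sequentially. (real N * rr \<theta> N / (\<Sum>j\<le>N. rr \<theta> j)) * ((\<Sum>n\<le>N. rr \<theta> n) / Da N) * Gamma th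
        = hseq \<theta> N / (real N powr (th - 1) / Gamma th * Lambda \<theta> th (real N))"
      using eventually_gt_at_top[of 0]
    proof eventually_elim
      case (elim N)
      have Np: "real N > 0" using elim by simp
      have Hp: "(\<Sum>j\<le>N. rr \<theta> j) > 0"
      proof -
        have "rr \<theta> 0 \<le> (\<Sum>j\<le>N. rr \<theta> j)" using rr_nonneg[OF w0] by (intro member_le_sum) auto
        then show ?thesis by simp
      qed
      have pw: "real N powr (th - 1) = real N powr th / real N" using Np by (simp add: powr_diff)
      have eq: "real N powr (th - 1) / Gamma th * Lambda \<theta> th (real N) = Da N / (real N * Gamma th)"
        unfolding pw Da_def Lambda_Phi by (simp add: field_simps)
      have Dp: "Da N > 0" unfolding Da_def using Np by simp
      show ?case unfolding eq hseq_rr using Hp Np Gpos Dp by (simp add: field_simps)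
    qed
    then show "((\<lambda>N. hseq \<theta> N / (real N powr (th - 1) / Gamma th * Lambda \<theta> th (real N))) \<longlongrightarrow> 1) at_top"
      using Lim_transform_eventually[OF lim3] one by simp
  qed
qed


end
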